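(* Let $K$ be an algebraically closed field of characteristic zero. For any integers $s\ge 1$ and $c\ge 2$ there is an Artinian complete intersection graded $K$-algebra $A_F=K[x_1,\dots,x_c]/\operatorname{Ann}(F)$ of codimension $c$ whose Macaulay dual generator $F\in K[X_1,\dots,X_c]$ is a sum of $s$ monomials. Moreover, this $A_F$ satisfies the strong Lefschetz property.
   Context: $K[X_1,\dots,X_c]$ is the divided power algebra, a module over $R=K[x_1,\dots,x_c]$ via contraction $x_i\circ X_j^k=\delta_{ij}X_j^{k-1}$ if $k>0$ and $0$ otherwise; for homogeneous $F$, $\operatorname{Ann}(F)=\{f\in R\mid f\circ F=0\}$, $A_F=R/\operatorname{Ann}(F)$, and $F$ is its Macaulay dual generator. A graded Artinian $K$-algebra $A$ has the strong Lefschetz property if there is a linear form $\ell\in A_1$ such that for all $i\ge 0$, $k\ge 1$ the map $\times\ell^k:A_i\to A_{i+k}$ has maximal rank. *)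

theory Defs
  imports "HOL-Library.Poly_Mapping" "HOL-Computational_Algebra.Polynomial"
begin

text \<open>The same carrier is used for
R = K[x_0..x_(c-1)] and (as a K-vector space) for the divided power algebra
K[X_0..X_(c-1)]; only the R-module structure (contraction) of the latter is needed.\<close>

type_synonym 'a mpoly = "(nat \<Rightarrow>\<^sub>0 nat) \<Rightarrow>\<^sub>0 'a"

definition tdeg :: "(nat \<Rightarrow>\<^sub>0 nat) \<Rightarrow> nat" where
  "tdeg \<alpha> = (\<Sum>i\<in>Poly_Mapping.keys \<alpha>. Poly_Mapping.lookup \<alpha> i)"

definition in_vars :: "nat \<Rightarrow> 'a::zero mpoly \<Rightarrow> bool" where
  "in_vars c p \<longleftrightarrow> (\<forall>\<alpha>\<in>Poly_Mapping.keys p. Poly_Mapping.keys \<alpha> \<subseteq> {..<c})"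

definition homog :: "nat \<Rightarrow> 'a::zero mpoly \<Rightarrow> bool" where
  "homog d p \<longleftrightarrow> (\<forall>\<alpha>\<in>Poly_Mapping.keys p. tdeg \<alpha> = d)"

definition mdvd :: "(nat \<Rightarrow>\<^sub>0 nat) \<Rightarrow> (nat \<Rightarrow>\<^sub>0 nat) \<Rightarrow> bool" where
  "mdvd \<beta> \<alpha> \<longleftrightarrow> (\<forall>i. Poly_Mapping.lookup \<beta> i \<le> Poly_Mapping.lookup \<alpha> i)"

definition contract :: "'a::comm_ring_1 mpoly \<Rightarrow> 'a mpoly \<Rightarrow> 'a mpoly" where
  "contract f F = (\<Sum>\<beta>\<in>Poly_Mapping.keys f. \<Sum>\<alpha>\<in>Poly_Mapping.keys F.
      if mdvd \<beta> \<alpha> then Poly_Mapping.single (\<alpha> - \<beta>) (Poly_Mapping.lookup f \<beta> * Poly_Mapping.lookup F \<alpha>) else 0)"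

definition Ann :: "nat \<Rightarrow> 'a::comm_ring_1 mpoly \<Rightarrow> 'a mpoly set" where
  "Ann c F = {f. in_vars c f \<and> contract f F = 0}"

definition Rdeg :: "nat \<Rightarrow> nat \<Rightarrow> 'a::zero mpoly set" where
  "Rdeg c i = {f. in_vars c f \<and> homog i f}"

definition artinian_AF :: "nat \<Rightarrow> 'a::comm_ring_1 mpoly \<Rightarrow> bool" where
  "artinian_AF c F \<longleftrightarrow> (\<exists>N. \<forall>n\<ge>N. Rdeg c n \<subseteq> Ann c F)"

text \<open>A_F has codimension c: no nonzero linear form of R lies in Ann(F), i.e. dim (A_F)_1 = c.\<close>
definition codim_AF :: "nat \<Rightarrow> 'a::comm_ring_1 mpoly \<Rightarrow> bool" where
  "codim_AF c F \<longleftrightarrow> (\<forall>l\<in>Rdeg c 1. l \<in> Ann c F \<longrightarrow> l = 0)"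

definition complete_intersection_AF :: "nat \<Rightarrow> 'a::comm_ring_1 mpoly \<Rightarrow> bool" where
  "complete_intersection_AF c F \<longleftrightarrow>
     (\<exists>g :: nat \<Rightarrow> 'a mpoly. (\<forall>j<c. in_vars c (g j)) \<and>
        Ann c F = {(\<Sum>j<c. h j * g j) | h. \<forall>j<c. in_vars c (h j)})"

definition strong_lefschetz_AF :: "nat \<Rightarrow> 'a::comm_ring_1 mpoly \<Rightarrow> bool" where
  "strong_lefschetz_AF c F \<longleftrightarrow>
     (\<exists>l\<in>Rdeg c 1. \<forall>i k. k \<ge> 1 \<longrightarrow>
        ((\<forall>g\<in>Rdeg c i. l ^ k * g \<in> Ann c F \<longrightarrow> g \<in> Ann c F) \<or>
         (\<forall>h\<in>Rdeg c (i + k). \<exists>g\<in>Rdeg c i. h - l ^ k * g \<in> Ann c F)))"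

end

theory Submission
  imports Defs
begin

lemma tdeg_superset:
  assumes "finite S" "Poly_Mapping.keys \<alpha> \<subseteq> S"
  shows "tdeg \<alpha> = (\<Sum>i\<in>S. Poly_Mapping.lookup \<alpha> i)"
  unfolding tdeg_def using assms
  by (intro sum.mono_neutral_left) (auto simp: in_keys_iff)

lemma tdeg_add: "tdeg (\<alpha> + \<beta>) = tdeg \<alpha> + tdeg \<beta>"
proof -
  let ?S = "Poly_Mapping.keys \<alpha> \<union> Poly_Mapping.keys \<beta>"
  have "tdeg (\<alpha> + \<beta>) = (\<Sum>i\<in>?S. Poly_Mapping.lookup (\<alpha> + \<beta>) i)"
    by (rule tdeg_superset) (use keys_add[of \<alpha> \<beta>] in auto)
  also have "\<dots> = (\<Sum>i\<in>?S. Poly_Mapping.lookup \<alpha> i) + (\<Sum>i\<in>?S. Poly_Mapping.lookup \<beta> i)"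
    by (simp add: lookup_add sum.distrib)
  also have "\<dots> = tdeg \<alpha> + tdeg \<beta>"
    using tdeg_superset[of ?S \<alpha>] tdeg_superset[of ?S \<beta>] by simp
  finally show ?thesis .
qed

lemma tdeg_single [simp]: "tdeg (Poly_Mapping.single i n) = n"
  by (simp add: tdeg_def)

lemma tdeg_zero [simp]: "tdeg 0 = 0"
  by (simp add: tdeg_def)

lemma lookup_le_tdeg: "Poly_Mapping.lookup \<alpha> i \<le> tdeg \<alpha>"
proof (cases "i \<in> Poly_Mapping.keys \<alpha>")
  case True
  then show ?thesis unfolding tdeg_def
    by (intro member_le_sum) auto
next
  case False
  then show ?thesis by (simp add: in_keys_iff)
qed

lemma tdeg_eq_0_iff: "tdeg \<alpha> = 0 \<longleftrightarrow> \<alpha> = 0"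
proof
  assume "tdeg \<alpha> = 0"
  then have "\<And>i. Poly_Mapping.lookup \<alpha> i = 0" using lookup_le_tdeg[of \<alpha>] by (metis le_zero_eq)
  then show "\<alpha> = 0" by (intro poly_mapping_eqI) simp
qed simp

lemma mdvd_iff_add: "mdvd \<beta> \<alpha> \<longleftrightarrow> (\<exists>\<gamma>. \<alpha> = \<beta> + \<gamma>)"
proof
  assume "mdvd \<beta> \<alpha>"
  then have "\<alpha> = \<beta> + (\<alpha> - \<beta>)"
    by (intro poly_mapping_eqI) (auto simp: mdvd_def lookup_add lookup_minus)
  then show "\<exists>\<gamma>. \<alpha> = \<beta> + \<gamma>" by blast
qed (auto simp: mdvd_def lookup_add)

lemma mdvd_add_diff: "mdvd \<beta> \<alpha> \<Longrightarrow> \<beta> + (\<alpha> - \<beta>) = \<alpha>"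
  by (intro poly_mapping_eqI) (auto simp: mdvd_def lookup_add lookup_minus)

lemma mdvd_tdeg: "mdvd \<beta> \<alpha> \<Longrightarrow> tdeg \<alpha> = tdeg \<beta> + tdeg (\<alpha> - \<beta>)"
  using mdvd_add_diff tdeg_add by metis

lemma mdvd_tdeg_le: "mdvd \<beta> \<alpha> \<Longrightarrow> tdeg \<beta> \<le> tdeg \<alpha>"
  using mdvd_tdeg by fastforce

lemma add_diff_cancel_pm: "(\<beta> + \<gamma>) - \<gamma> = (\<beta>::nat \<Rightarrow>\<^sub>0 nat)"
  by (intro poly_mapping_eqI) (auto simp: lookup_add lookup_minus)

lemma add_eq_iff_mdvd: "(\<beta> + \<gamma> = \<alpha>) \<longleftrightarrow> (mdvd \<gamma> \<alpha> \<and> \<beta> = \<alpha> - \<gamma>)"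
  by (metis add.commute add_diff_cancel_pm mdvd_add_diff mdvd_iff_add)

definition C :: "'a::comm_ring_1 \<Rightarrow> 'a mpoly" where "C a = Poly_Mapping.single 0 a"

definition X :: "nat \<Rightarrow> 'a::comm_ring_1 mpoly" where
  "X i = Poly_Mapping.single (Poly_Mapping.single i 1) 1"

lemma lookup_C_mult [simp]: "Poly_Mapping.lookup (C a * p) \<beta> = a * Poly_Mapping.lookup p \<beta>"
  by (simp add: C_def mult_map_scale_conv_mult[symmetric] map.rep_eq when_def)

lemma C_mult_C [simp]: "C a * C b = C (a * b)"
  by (simp add: C_def mult_single)

lemma C_1 [simp]: "C 1 = 1" and C_0 [simp]: "C 0 = 0"
  by (simp_all add: C_def)

lemma C_add: "C (a + b) = C a + C b"
  by (simp add: C_def single_add)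

lemma of_int_C: "(of_int n :: 'a::comm_ring_1 mpoly) = C (of_int n)"
  by (simp add: C_def)

lemma C_neg: "C (-1) * y = - y"
  by (rule poly_mapping_eqI) simp

lemma of_int_comb: "(of_int A :: 'a::comm_ring_1 mpoly) * y + of_int B * y = of_int (A + B) * y"
  by (simp add: distrib_right)

lemma of_nat_C: "(of_nat n :: 'a::comm_ring_1 mpoly) = C (of_nat n)"
  by (simp add: C_def)

lemma poly_expand: "p = (\<Sum>\<gamma>\<in>Poly_Mapping.keys p. Poly_Mapping.single \<gamma> (Poly_Mapping.lookup p \<gamma>))"
proof (rule poly_mapping_eqI)
  fix k
  show "Poly_Mapping.lookup p k = Poly_Mapping.lookup (\<Sum>\<gamma>\<in>Poly_Mapping.keys p. Poly_Mapping.single \<gamma> (Poly_Mapping.lookup p \<gamma>)) k"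
    by (cases "k \<in> Poly_Mapping.keys p")
       (auto simp: lookup_sum lookup_single when_def in_keys_iff)
qed

lemma poly_expand_superset:
  assumes "finite S" "Poly_Mapping.keys p \<subseteq> S"
  shows "p = (\<Sum>\<gamma>\<in>S. Poly_Mapping.single \<gamma> (Poly_Mapping.lookup p \<gamma>))"
proof -
  have "(\<Sum>\<gamma>\<in>S. Poly_Mapping.single \<gamma> (Poly_Mapping.lookup p \<gamma>)) =
        (\<Sum>\<gamma>\<in>Poly_Mapping.keys p. Poly_Mapping.single \<gamma> (Poly_Mapping.lookup p \<gamma>))"
    using assms by (intro sum.mono_neutral_right) (auto simp: in_keys_iff)
  then show ?thesis using poly_expand by metis
qed

lemma lookup_single_mult:
  "Poly_Mapping.lookup (Poly_Mapping.single \<delta> a * p) \<gamma> =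
     (if mdvd \<delta> \<gamma> then a * Poly_Mapping.lookup p (\<gamma> - \<delta>) else (0::'a::comm_ring_1))"
proof -
  have "Poly_Mapping.single \<delta> a * p = (\<Sum>\<beta>\<in>Poly_Mapping.keys p. Poly_Mapping.single (\<delta> + \<beta>) (a * Poly_Mapping.lookup p \<beta>))"
    by (subst poly_expand[of p]) (simp add: sum_distrib_left mult_single)
  then have "Poly_Mapping.lookup (Poly_Mapping.single \<delta> a * p) \<gamma> =
      (\<Sum>\<beta>\<in>Poly_Mapping.keys p. if \<beta> = \<gamma> - \<delta> \<and> mdvd \<delta> \<gamma> then a * Poly_Mapping.lookup p \<beta> else 0)"
    apply (simp add: lookup_sum lookup_single when_def)
    apply (intro sum.cong refl)
    subgoal for x using add_eq_iff_mdvd[of x \<delta> \<gamma>] add.commute[of x \<delta>] by auto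
    done
  also have "\<dots> = (if mdvd \<delta> \<gamma> then a * Poly_Mapping.lookup p (\<gamma> - \<delta>) else 0)"
    by (auto simp: in_keys_iff)
  finally show ?thesis .
qed

lemma contract_lookup:
  "Poly_Mapping.lookup (contract g G) \<beta> =
     (\<Sum>\<gamma>\<in>Poly_Mapping.keys g. Poly_Mapping.lookup g \<gamma> * Poly_Mapping.lookup G (\<beta> + \<gamma>))"
proof -
  have inner: "(\<Sum>\<alpha>\<in>Poly_Mapping.keys G. Poly_Mapping.lookup (if mdvd \<gamma> \<alpha> then Poly_Mapping.single (\<alpha> - \<gamma>)
          (Poly_Mapping.lookup g \<gamma> * Poly_Mapping.lookup G \<alpha>) else 0) \<beta>)
        = Poly_Mapping.lookup g \<gamma> * Poly_Mapping.lookup G (\<beta> + \<gamma>)" for \<gamma>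
  proof -
    have "(\<Sum>\<alpha>\<in>Poly_Mapping.keys G. Poly_Mapping.lookup (if mdvd \<gamma> \<alpha> then Poly_Mapping.single (\<alpha> - \<gamma>)
          (Poly_Mapping.lookup g \<gamma> * Poly_Mapping.lookup G \<alpha>) else 0) \<beta>)
       = (\<Sum>\<alpha>\<in>Poly_Mapping.keys G. if \<alpha> = \<beta> + \<gamma> then Poly_Mapping.lookup g \<gamma> * Poly_Mapping.lookup G \<alpha> else 0)"
    proof (intro sum.cong refl)
      fix \<alpha>
      show "Poly_Mapping.lookup (if mdvd \<gamma> \<alpha> then Poly_Mapping.single (\<alpha> - \<gamma>)
          (Poly_Mapping.lookup g \<gamma> * Poly_Mapping.lookup G \<alpha>) else 0) \<beta> =
          (if \<alpha> = \<beta> + \<gamma> then Poly_Mapping.lookup g \<gamma> * Poly_Mapping.lookup G \<alpha> else 0)"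
        using add_eq_iff_mdvd[of \<beta> \<gamma> \<alpha>] by (auto simp: lookup_single when_def)
    qed
    also have "\<dots> = Poly_Mapping.lookup g \<gamma> * Poly_Mapping.lookup G (\<beta> + \<gamma>)"
      by (auto simp: sum.delta' in_keys_iff)
    finally show ?thesis .
  qed
  show ?thesis
    unfolding contract_def lookup_sum by (simp add: inner)
qed

lemma contract_lookup_superset:
  assumes "finite S" "Poly_Mapping.keys g \<subseteq> S"
  shows "Poly_Mapping.lookup (contract g G) \<beta> =
     (\<Sum>\<gamma>\<in>S. Poly_Mapping.lookup g \<gamma> * Poly_Mapping.lookup G (\<beta> + \<gamma>))"
  unfolding contract_lookup using assms
  by (intro sum.mono_neutral_left) (auto simp: in_keys_iff)

lemma contract_add_left: "contract (g + h) G = contract g G + contract h G"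
proof (rule poly_mapping_eqI)
  fix \<beta>
  let ?S = "Poly_Mapping.keys g \<union> Poly_Mapping.keys h"
  have k: "Poly_Mapping.keys (g + h) \<subseteq> ?S" by (rule keys_add)
  show "Poly_Mapping.lookup (contract (g + h) G) \<beta> = Poly_Mapping.lookup (contract g G + contract h G) \<beta>"
    by (simp add: lookup_add contract_lookup_superset[OF _ k] contract_lookup_superset[of ?S]
        distrib_right sum.distrib)
qed

lemma contract_add_right: "contract g (G + H) = contract g G + contract g H"
  by (rule poly_mapping_eqI) (simp add: lookup_add contract_lookup distrib_left sum.distrib)

lemma contract_zero_left [simp]: "contract 0 G = 0"
  by (simp add: contract_def)

lemma contract_zero_right [simp]: "contract g 0 = 0"
  by (simp add: contract_def)

lemma contract_C_left: "contract (C a * g) G = C a * contract g G"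
proof (rule poly_mapping_eqI)
  fix \<beta>
  have k: "Poly_Mapping.keys (C a * g) \<subseteq> Poly_Mapping.keys g"
    by (auto simp: in_keys_iff)
  show "Poly_Mapping.lookup (contract (C a * g) G) \<beta> = Poly_Mapping.lookup (C a * contract g G) \<beta>"
    unfolding contract_lookup_superset[OF finite_keys k]
    by (simp add: contract_lookup sum_distrib_left mult.assoc)
qed

lemma contract_C_right: "contract g (C a * G) = C a * contract g G"
  by (rule poly_mapping_eqI) (simp add: contract_lookup sum_distrib_left mult.left_commute)

lemma contract_sum_left: "contract (\<Sum>i\<in>I. g i) G = (\<Sum>i\<in>I. contract (g i) G)"
  by (induction I rule: infinite_finite_induct) (auto simp: contract_add_left)

lemma contract_sum_right: "contract g (\<Sum>i\<in>I. G i) = (\<Sum>i\<in>I. contract g (G i))"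
  by (induction I rule: infinite_finite_induct) (auto simp: contract_add_right)

lemma contract_neg_left: "contract (- g) G = - contract g G"
  by (rule poly_mapping_eqI) (simp add: contract_lookup sum_negf)

lemma contract_neg_right: "contract g (- G) = - contract g G"
  by (rule poly_mapping_eqI) (simp add: contract_lookup sum_negf)

lemma contract_diff_left: "contract (g - h) G = contract g G - contract h G"
  by (simp only: diff_conv_add_uminus contract_add_left contract_neg_left)

lemma contract_diff_right: "contract g (G - H) = contract g G - contract g H"
  by (simp only: diff_conv_add_uminus contract_add_right contract_neg_right)

lemma contract_single_lookup:
  "Poly_Mapping.lookup (contract (Poly_Mapping.single \<gamma> a) G) \<beta> = a * Poly_Mapping.lookup G (\<beta> + \<gamma>)"
  by (cases "a = 0") (simp_all add: contract_lookup)

lemma contract_one [simp]: "contract 1 G = G"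
  by (rule poly_mapping_eqI) (simp add: contract_lookup)

lemma mult_expand:
  "p * q = (\<Sum>\<gamma>\<in>Poly_Mapping.keys p. \<Sum>\<gamma>'\<in>Poly_Mapping.keys q.
              Poly_Mapping.single (\<gamma> + \<gamma>') (Poly_Mapping.lookup p \<gamma> * Poly_Mapping.lookup q \<gamma>'))"
  by (subst poly_expand[of p], subst poly_expand[of q])
     (simp add: sum_distrib_left sum_distrib_right mult_single sum.swap[where B="Poly_Mapping.keys q"])

lemma contract_mult: "contract (p * q) G = contract p (contract q G)"
proof (rule poly_mapping_eqI)
  fix \<beta>
  have "Poly_Mapping.lookup (contract (p * q) G) \<beta> =
     (\<Sum>\<gamma>\<in>Poly_Mapping.keys p. \<Sum>\<gamma>'\<in>Poly_Mapping.keys q.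
        Poly_Mapping.lookup p \<gamma> * Poly_Mapping.lookup q \<gamma>' * Poly_Mapping.lookup G (\<beta> + (\<gamma> + \<gamma>')))"
    by (subst mult_expand) (simp add: contract_sum_left lookup_sum contract_single_lookup)
  also have "\<dots> = Poly_Mapping.lookup (contract p (contract q G)) \<beta>"
    by (simp add: contract_lookup sum_distrib_left mult_ac add_ac)
  finally show "Poly_Mapping.lookup (contract (p * q) G) \<beta> = Poly_Mapping.lookup (contract p (contract q G)) \<beta>" .
qed

lemma contract_power: "contract (l ^ k) G = ((contract l) ^^ k) G"
  by (induction k) (simp_all add: contract_mult)

lemma contract_X_lookup:
  "Poly_Mapping.lookup (contract (X i) G) \<beta> = Poly_Mapping.lookup G (\<beta> + Poly_Mapping.single i 1)"
  by (simp add: X_def contract_single_lookup)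


section \<open>Abstract sl2 argument\<close>

context
  fixes e f :: "'a::field_char_0 mpoly \<Rightarrow> 'a mpoly" and V :: "nat \<Rightarrow> 'a mpoly set"
    and N :: int and d :: nat
  assumes e_add: "\<And>x y. e (x + y) = e x + e y"
    and e_C: "\<And>a x. e (C a * x) = C a * e x"
    and f_add: "\<And>x y. f (x + y) = f x + f y"
    and f_C: "\<And>a x. f (C a * x) = C a * f x"
    and V_0: "\<And>m. 0 \<in> V m"
    and V_add: "\<And>m x y. x \<in> V m \<Longrightarrow> y \<in> V m \<Longrightarrow> x + y \<in> V m"
    and V_C: "\<And>m a x. x \<in> V m \<Longrightarrow> C a * x \<in> V m"
    and e_V: "\<And>m x. x \<in> V m \<Longrightarrow> e x \<in> V (m - 1)"
    and e_V0: "\<And>x. x \<in> V 0 \<Longrightarrow> e x = 0"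
    and f_V: "\<And>m x. x \<in> V m \<Longrightarrow> f x \<in> V (Suc m)"
    and V_top: "\<And>m x. d < m \<Longrightarrow> x \<in> V m \<Longrightarrow> x = 0"
    and comm: "\<And>m x. x \<in> V m \<Longrightarrow> e (f x) = f (e x) + of_int (N - 2 * int m) * x"
begin

lemma e0: "e 0 = 0"
  using e_C[of 0 0] by simp

lemma f0: "f 0 = 0"
  using f_C[of 0 0] by simp

lemma e_diff: "e (x - y) = e x - e y"
  using e_add[of "x - y" y] by (simp add: algebra_simps)

lemma V_diff: "x \<in> V m \<Longrightarrow> y \<in> V m \<Longrightarrow> x - y \<in> V m"
proof -
  assume "x \<in> V m" "y \<in> V m"
  moreover have "x - y = x + C (-1) * y" by (simp add: C_neg)
  ultimately show ?thesis using V_add V_C by metis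
qed

lemma epow_add: "(e ^^ k) (x + y) = (e ^^ k) x + (e ^^ k) y"
  by (induction k) (simp_all add: e_add)

lemma epow_C: "(e ^^ k) (C a * x) = C a * (e ^^ k) x"
  by (induction k) (simp_all add: e_C)

lemma epow_of_int: "(e ^^ k) (of_int n * x) = of_int n * (e ^^ k) x"
  by (simp add: of_int_C epow_C)

lemma e_of_int: "e (of_int n * x) = of_int n * e x"
  by (simp add: of_int_C e_C)

lemma f_of_int: "f (of_int n * x) = of_int n * f x"
  by (simp add: of_int_C f_C)

lemma epow0: "(e ^^ k) 0 = 0"
  by (induction k) (simp_all add: e0)

lemma epow_diff: "(e ^^ k) (x - y) = (e ^^ k) x - (e ^^ k) y"
  using epow_add[of k "x - y" y] by (simp add: algebra_simps)

lemma fpow_C: "(f ^^ k) (C a * x) = C a * (f ^^ k) x"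
  by (induction k) (simp_all add: f_C)

lemma epow_V: "x \<in> V m \<Longrightarrow> (e ^^ k) x \<in> V (m - k)"
proof (induction k)
  case (Suc k)
  then have "e ((e ^^ k) x) \<in> V (m - k - 1)" by (intro e_V) simp
  then show ?case by simp
qed simp

lemma fpow_V: "x \<in> V m \<Longrightarrow> (f ^^ k) x \<in> V (m + k)"
proof (induction k)
  case (Suc k)
  then have "f ((f ^^ k) x) \<in> V (Suc (m + k))" by (intro f_V) simp
  then show ?case by simp
qed simp

lemma epow_vanish: "x \<in> V m \<Longrightarrow> m < k \<Longrightarrow> (e ^^ k) x = 0"
proof -
  assume x: "x \<in> V m" and mk: "m < k"
  define r where "r = k - Suc m"
  have k: "k = r + Suc m" unfolding r_def using mk by simp
  have "(e ^^ m) x \<in> V 0" using epow_V[OF x, of m] by simp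
  then have "(e ^^ Suc m) x = 0" by (simp add: e_V0)
  then show ?thesis unfolding k funpow_add by (simp add: epow0)
qed

lemma comm_pow:
  assumes x: "x \<in> V m"
  shows "(e ^^ Suc j) (f x) = f ((e ^^ Suc j) x) + of_int ((int j + 1) * (N - 2 * int m + int j)) * (e ^^ j) x"
proof (induction j)
  case 0
  then show ?case using comm[OF x] by simp
next
  case (Suc j)
  define y where "y = (e ^^ Suc j) x"
  have yV: "y \<in> V (m - Suc j)" unfolding y_def by (rule epow_V[OF x])
  have efy: "e (f y) = f (e y) + of_int (N - 2 * int m + 2 * int j + 2) * y"
  proof (cases "Suc j \<le> m")
    case True
    then have "int (m - Suc j) = int m - int j - 1" by simp
    then show ?thesis using comm[OF yV] by (simp add: algebra_simps)
  next
    case False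
    then have "y = 0" unfolding y_def using epow_vanish[OF x, of "Suc j"] by simp
    then show ?thesis by (simp add: e0 f0)
  qed
  have "(e ^^ Suc (Suc j)) (f x) = e ((e ^^ Suc j) (f x))" by simp
  also have "\<dots> = e (f y) + of_int ((int j + 1) * (N - 2 * int m + int j)) * e ((e ^^ j) x)"
    by (subst Suc) (simp only: e_add e_of_int y_def)
  also have "e ((e ^^ j) x) = y" unfolding y_def by simp
  also have "e (f y) + of_int ((int j + 1) * (N - 2 * int m + int j)) * y =
      f (e y) + (of_int (N - 2 * int m + 2 * int j + 2) * y + of_int ((int j + 1) * (N - 2 * int m + int j)) * y)"
    by (simp add: efy algebra_simps)
  also have "of_int (N - 2 * int m + 2 * int j + 2) * y + of_int ((int j + 1) * (N - 2 * int m + int j)) * y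
      = (of_int ((int (Suc j) + 1) * (N - 2 * int m + int (Suc j))) :: 'a mpoly) * y"
    unfolding of_int_comb by (simp add: algebra_simps)
  finally show ?case unfolding y_def by simp
qed

lemma of_int_mult_eq_0:
  fixes x :: "'a mpoly"
  assumes "of_int n * x = 0" "n \<noteq> 0"
  shows "x = 0"
proof (rule poly_mapping_eqI)
  fix \<beta>
  have "Poly_Mapping.lookup (of_int n * x) \<beta> = 0" using assms by simp
  then show "Poly_Mapping.lookup x \<beta> = Poly_Mapping.lookup 0 \<beta>"
    using assms(2) by (simp add: of_int_C)
qed

lemma inj_aux:
  "\<forall>m. d < m + t \<longrightarrow> (\<forall>k x. x \<in> V m \<longrightarrow> N - 2 * int m + int k \<le> 0 \<longrightarrow> (e ^^ k) x = 0 \<longrightarrow> x = 0)"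
proof (induction t)
  case 0
  then show ?case using V_top by auto
next
  case (Suc t)
  show ?case
  proof (rule allI, rule impI)
    fix m
    assume dm: "d < m + Suc t"
    show "\<forall>k x. x \<in> V m \<longrightarrow> N - 2 * int m + int k \<le> 0 \<longrightarrow> (e ^^ k) x = 0 \<longrightarrow> x = 0"
    proof (cases "d < m + t")
      case True
      then show ?thesis using Suc.IH by blast
    next
      case False
      then have IH: "\<And>k x. x \<in> V (Suc m) \<Longrightarrow> N - 2 * int (Suc m) + int k \<le> 0 \<Longrightarrow> (e ^^ k) x = 0 \<Longrightarrow> x = 0"
        using Suc.IH dm by (metis add_Suc_shift add_Suc_right)
      have "\<forall>x. x \<in> V m \<longrightarrow> N - 2 * int m + int k \<le> 0 \<longrightarrow> (e ^^ k) x = 0 \<longrightarrow> x = 0" for k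
      proof (induction k)
        case 0
        then show ?case by simp
      next
        case (Suc k)
        show ?case
        proof (intro allI impI)
          fix x assume xV: "x \<in> V m" and wt: "N - 2 * int m + int (Suc k) \<le> 0"
            and ek: "(e ^^ Suc k) x = 0"
          have ek2: "(e ^^ Suc (Suc k)) x = 0" using ek by (simp add: e0)
          have "(e ^^ Suc (Suc k)) (f x) = 0"
            using comm_pow[OF xV, of "Suc k"] ek ek2 by (simp add: f0)
          moreover have "f x \<in> V (Suc m)" using f_V[OF xV] .
          moreover have "N - 2 * int (Suc m) + int (Suc (Suc k)) \<le> 0" using wt by simp
          ultimately have fx: "f x = 0" using IH by blast
          have "(e ^^ Suc k) (f x) = f ((e ^^ Suc k) x) + of_int ((int k + 1) * (N - 2 * int m + int k)) * (e ^^ k) x"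
            by (rule comm_pow[OF xV])
          then have "0 = 0 + of_int ((int k + 1) * (N - 2 * int m + int k)) * (e ^^ k) x"
            by (simp only: fx ek epow0 f0)
          then have "of_int ((int k + 1) * (N - 2 * int m + int k)) * (e ^^ k) x = 0"
            by (metis add_0_left)
          moreover have "(int k + 1) * (N - 2 * int m + int k) \<noteq> 0" using wt by simp
          ultimately have "(e ^^ k) x = 0" by (rule of_int_mult_eq_0)
          then show "x = 0" using Suc.IH xV wt by simp
        qed
      qed
      then show ?thesis by blast
    qed
  qed
qed

lemma e_inj:
  "x \<in> V m \<Longrightarrow> N - 2 * int m + int k \<le> 0 \<Longrightarrow> (e ^^ k) x = 0 \<Longrightarrow> x = 0"
  using inj_aux[of "Suc d"] by auto

lemma hw_step:
  assumes w: "w \<in> V m" and ew: "e w = 0"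
  shows "e ((f ^^ Suc j) w) = of_int ((int j + 1) * (N - 2 * int m - int j)) * (f ^^ j) w"
proof (induction j)
  case 0
  then show ?case using comm[OF w] ew by (simp add: f0)
next
  case (Suc j)
  have fj: "(f ^^ Suc j) w \<in> V (m + Suc j)" by (rule fpow_V[OF w])
  have "e ((f ^^ Suc (Suc j)) w) = e (f ((f ^^ Suc j) w))" by simp
  also have "\<dots> = f (e ((f ^^ Suc j) w)) + of_int (N - 2 * int (m + Suc j)) * (f ^^ Suc j) w"
    by (rule comm[OF fj])
  also have "\<dots> = of_int ((int j + 1) * (N - 2 * int m - int j)) * (f ^^ Suc j) w
       + of_int (N - 2 * int (m + Suc j)) * (f ^^ Suc j) w"
    by (subst Suc) (simp only: f_of_int funpow.simps(2) o_apply)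
  also have "\<dots> = of_int ((int (Suc j) + 1) * (N - 2 * int m - int (Suc j))) * (f ^^ Suc j) w"
    unfolding of_int_comb by (simp add: algebra_simps)
  finally show ?case .
qed

lemma hw_pow:
  assumes w: "w \<in> V m" and ew: "e w = 0"
  shows "(e ^^ k) ((f ^^ k) w) = of_int (\<Prod>j<k. (int j + 1) * (N - 2 * int m - int j)) * w"
proof (induction k)
  case 0
  then show ?case by simp
next
  case (Suc k)
  have "(e ^^ Suc k) ((f ^^ Suc k) w) = (e ^^ k) (e ((f ^^ Suc k) w))"
    by (simp add: funpow_Suc_right del: funpow.simps)
  also have "\<dots> = of_int ((int k + 1) * (N - 2 * int m - int k)) * (e ^^ k) ((f ^^ k) w)"
    by (simp only: hw_step[OF w ew] epow_of_int)
  also have "\<dots> = of_int (\<Prod>j<Suc k. (int j + 1) * (N - 2 * int m - int j)) * w"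
    by (simp add: Suc mult_ac)
  finally show ?case .
qed

lemma e_surj:
  "w \<in> V m \<Longrightarrow> int k \<le> N - 2 * int m \<Longrightarrow> \<exists>v\<in>V (m + k). (e ^^ k) v = w"
proof (induction m arbitrary: k w)
  case 0
  note w = "0.prems"(1)
  have ew: "e w = 0" using e_V0[OF w] .
  define P where "P = (\<Prod>j<k. (int j + 1) * (N - 2 * int 0 - int j))"
  have P0: "P \<noteq> 0" unfolding P_def using "0.prems"(2) by (auto simp: prod_zero_iff)
  define v where "v = C (inverse (of_int P)) * (f ^^ k) w"
  have "v \<in> V (0 + k)" unfolding v_def by (intro V_C fpow_V w)
  moreover have "(e ^^ k) v = w"
    unfolding v_def epow_C hw_pow[OF w ew] P_def[symmetric] of_int_C mult.assoc[symmetric] C_mult_C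
    using P0 by simp
  ultimately show ?case by blast
next
  case (Suc m)
  note w = Suc.prems(1)
  have "e w \<in> V m" using e_V[OF w] by simp
  moreover have "int (Suc k) \<le> N - 2 * int m" using Suc.prems(2) by simp
  ultimately obtain u where u: "u \<in> V (m + Suc k)" and eu: "(e ^^ Suc k) u = e w"
    using Suc.IH by blast
  define w' where "w' = w - (e ^^ k) u"
  have ekuV: "(e ^^ k) u \<in> V (Suc m)" using epow_V[OF u, of k] by simp
  have w'V: "w' \<in> V (Suc m)" unfolding w'_def by (rule V_diff[OF w ekuV])
  have ew': "e w' = 0" unfolding w'_def e_diff using eu by simp
  define P where "P = (\<Prod>j<k. (int j + 1) * (N - 2 * int (Suc m) - int j))"
  have P0: "P \<noteq> 0" unfolding P_def using Suc.prems(2) by (auto simp: prod_zero_iff)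
  define v where "v = u + C (inverse (of_int P)) * (f ^^ k) w'"
  have "v \<in> V (Suc m + k)" unfolding v_def using u by (intro V_add V_C fpow_V w'V) simp_all
  moreover have "(e ^^ k) v = w"
  proof -
    have "(e ^^ k) v = (e ^^ k) u + C (inverse (of_int P)) * (of_int P * w')"
      unfolding v_def epow_add epow_C hw_pow[OF w'V ew'] P_def by simp
    also have "C (inverse (of_int P)) * (of_int P * w') = w'"
      unfolding of_int_C mult.assoc[symmetric] C_mult_C using P0 by simp
    finally show ?thesis unfolding w'_def by simp
  qed
  ultimately show ?case by blast
qed

end


lemma keys_add_pm: "Poly_Mapping.keys ((\<alpha>::nat \<Rightarrow>\<^sub>0 nat) + \<beta>) = Poly_Mapping.keys \<alpha> \<union> Poly_Mapping.keys \<beta>"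
  by (auto simp: in_keys_iff lookup_add)

lemma in_vars_zero [simp]: "in_vars c 0"
  by (simp add: in_vars_def)

lemma in_vars_one [simp]: "in_vars c 1"
  by (simp add: in_vars_def)

lemma in_vars_single: "Poly_Mapping.keys \<gamma> \<subseteq> {..<c} \<Longrightarrow> in_vars c (Poly_Mapping.single \<gamma> a)"
  by (simp add: in_vars_def)

lemma in_vars_X: "i < c \<Longrightarrow> in_vars c (X i)"
  by (simp add: in_vars_def X_def)

lemma in_vars_C: "in_vars c (C a)"
  by (simp add: in_vars_def C_def)

lemma in_vars_add: "in_vars c p \<Longrightarrow> in_vars c q \<Longrightarrow> in_vars c (p + q)"
  unfolding in_vars_def using keys_add[of p q] by blast

lemma keys_neg: "Poly_Mapping.keys (- p) = Poly_Mapping.keys (p::'a::ab_group_add mpoly)"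
  by (auto simp: in_keys_iff)

lemma in_vars_neg: "in_vars c p \<Longrightarrow> in_vars c (- p)"
  unfolding in_vars_def keys_neg .

lemma in_vars_diff: "in_vars c p \<Longrightarrow> in_vars c q \<Longrightarrow> in_vars c (p - (q::'a::ab_group_add mpoly))"
  unfolding diff_conv_add_uminus by (intro in_vars_add in_vars_neg)

lemma in_vars_mult: "in_vars c p \<Longrightarrow> in_vars c q \<Longrightarrow> in_vars c (p * q)"
  unfolding in_vars_def using keys_mult[of p q] by (force simp: keys_add_pm)

lemma in_vars_sum: "(\<And>i. i \<in> I \<Longrightarrow> in_vars c (p i)) \<Longrightarrow> in_vars c (\<Sum>i\<in>I. p i)"
  by (induction I rule: infinite_finite_induct) (auto intro: in_vars_add)

lemma in_vars_power: "in_vars c p \<Longrightarrow> in_vars c (p ^ n)"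
  by (induction n) (auto intro: in_vars_mult)

lemma homog_zero [simp]: "homog d 0"
  by (simp add: homog_def)

lemma homog_one: "homog 0 1"
  by (simp add: homog_def)

lemma homog_single: "homog (tdeg \<gamma>) (Poly_Mapping.single \<gamma> a)"
  by (simp add: homog_def)

lemma homog_X: "homog 1 (X i)"
  by (simp add: homog_def X_def)

lemma homog_add: "homog d p \<Longrightarrow> homog d q \<Longrightarrow> homog d (p + q)"
  unfolding homog_def using keys_add[of p q] by blast

lemma homog_neg: "homog d p \<Longrightarrow> homog d (- p)"
  unfolding homog_def keys_neg .

lemma homog_diff: "homog d p \<Longrightarrow> homog d q \<Longrightarrow> homog d (p - (q::'a::ab_group_add mpoly))"
  unfolding diff_conv_add_uminus by (intro homog_add homog_neg)

lemma homog_C_mult: "homog d p \<Longrightarrow> homog d (C a * p)"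
  unfolding homog_def by (auto simp: in_keys_iff)

lemma homog_mult: "homog d p \<Longrightarrow> homog d' q \<Longrightarrow> homog (d + d') (p * q)"
  unfolding homog_def using keys_mult[of p q] by (force simp: tdeg_add)

lemma homog_sum: "(\<And>i. i \<in> I \<Longrightarrow> homog d (p i)) \<Longrightarrow> homog d (\<Sum>i\<in>I. p i)"
  by (induction I rule: infinite_finite_induct) (auto intro: homog_add)

lemma homog_power: "homog d p \<Longrightarrow> homog (n * d) (p ^ n)"
proof (induction n)
  case 0
  then show ?case by (simp add: homog_one)
next
  case (Suc n)
  then show ?case using homog_mult[of d p "n * d" "p ^ n"] by (simp add: add.commute)
qed

lemma Rdeg_iff: "g \<in> Rdeg c i \<longleftrightarrow> in_vars c g \<and> homog i g"
  by (simp add: Rdeg_def)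

section \<open>The monomial case\<close>

lemma contract_single_monomial:
  "contract (Poly_Mapping.single \<gamma> b) (Poly_Mapping.single a 1) =
     (if mdvd \<gamma> a then Poly_Mapping.single (a - \<gamma>) b else 0)"
proof (rule poly_mapping_eqI)
  fix \<beta>
  show "Poly_Mapping.lookup (contract (Poly_Mapping.single \<gamma> b) (Poly_Mapping.single a 1)) \<beta> =
        Poly_Mapping.lookup (if mdvd \<gamma> a then Poly_Mapping.single (a - \<gamma>) b else 0) \<beta>"
    unfolding contract_single_lookup
    using add_eq_iff_mdvd[of \<beta> \<gamma> a] by (auto simp: lookup_single when_def)
qed

lemma contract_monomial_lookup:
  "Poly_Mapping.lookup (contract g (Poly_Mapping.single a (1::'a::comm_ring_1))) \<beta> =
     (if mdvd \<beta> a then Poly_Mapping.lookup g (a - \<beta>) else 0)"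
proof -
  have "Poly_Mapping.lookup (contract g (Poly_Mapping.single a (1::'a))) \<beta> =
    (\<Sum>\<gamma>\<in>Poly_Mapping.keys g. if \<gamma> = a - \<beta> \<and> mdvd \<beta> a then Poly_Mapping.lookup g \<gamma> else 0)"
    unfolding contract_lookup
    by (intro sum.cong refl) (use add_eq_iff_mdvd[of _ \<beta> a] add.commute mdvd_add_diff[of \<beta> a] in \<open>auto simp: lookup_single when_def\<close>)
  also have "\<dots> = (if mdvd \<beta> a then Poly_Mapping.lookup g (a - \<beta>) else 0)"
    by (auto simp: in_keys_iff)
  finally show ?thesis .
qed

lemma mdvd_diff_self: "mdvd \<gamma> a \<Longrightarrow> a - (a - \<gamma>) = \<gamma>"
  by (intro poly_mapping_eqI) (auto simp: mdvd_def lookup_minus)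

lemma mdvd_diff: "mdvd (a - \<gamma>) a"
  by (auto simp: mdvd_def lookup_minus)

lemma mdvd_trans: "mdvd \<alpha> \<beta> \<Longrightarrow> mdvd \<beta> \<gamma> \<Longrightarrow> mdvd \<alpha> \<gamma>"
  unfolding mdvd_def using le_trans by blast

lemma contract_monomial_eq_0:
  "contract g (Poly_Mapping.single a (1::'a::comm_ring_1)) = 0 \<longleftrightarrow>
     (\<forall>\<gamma>. mdvd \<gamma> a \<longrightarrow> Poly_Mapping.lookup g \<gamma> = 0)"
proof
  assume h: "contract g (Poly_Mapping.single a 1) = 0"
  show "\<forall>\<gamma>. mdvd \<gamma> a \<longrightarrow> Poly_Mapping.lookup g \<gamma> = 0"
  proof (intro allI impI)
    fix \<gamma> assume "mdvd \<gamma> a"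
    then show "Poly_Mapping.lookup g \<gamma> = 0"
      using arg_cong[OF h, of "\<lambda>p. Poly_Mapping.lookup p (a - \<gamma>)"]
      by (simp add: contract_monomial_lookup mdvd_diff mdvd_diff_self)
  qed
next
  assume "\<forall>\<gamma>. mdvd \<gamma> a \<longrightarrow> Poly_Mapping.lookup g \<gamma> = 0"
  then show "contract g (Poly_Mapping.single a 1) = 0"
    by (intro poly_mapping_eqI) (simp add: contract_monomial_lookup mdvd_diff)
qed


lemma mono_artinian: "artinian_AF c (Poly_Mapping.single a (1::'a::comm_ring_1))"
  unfolding artinian_AF_def
proof (intro exI allI impI subsetI)
  fix n and g :: "'a mpoly" assume n: "Suc (tdeg a) \<le> n" and g: "g \<in> Rdeg c n"
  have "\<forall>\<gamma>. mdvd \<gamma> a \<longrightarrow> Poly_Mapping.lookup g \<gamma> = 0"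
  proof (intro allI impI)
    fix \<gamma> assume "mdvd \<gamma> a"
    then have "tdeg \<gamma> \<le> tdeg a" by (rule mdvd_tdeg_le)
    show "Poly_Mapping.lookup g \<gamma> = 0"
    proof (rule ccontr)
      assume "Poly_Mapping.lookup g \<gamma> \<noteq> 0"
      then have "\<gamma> \<in> Poly_Mapping.keys g" by (simp add: in_keys_iff)
      then have "tdeg \<gamma> = n" using g by (simp add: Rdeg_def homog_def)
      then show False using \<open>tdeg \<gamma> \<le> tdeg a\<close> n by simp
    qed
  qed
  then show "g \<in> Ann c (Poly_Mapping.single a 1)"
    using g by (simp add: Ann_def Rdeg_def contract_monomial_eq_0)
qed

lemma keys_diff_subset: "Poly_Mapping.keys ((\<gamma>::nat \<Rightarrow>\<^sub>0 nat) - t) \<subseteq> Poly_Mapping.keys \<gamma>"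
proof
  fix x assume "x \<in> Poly_Mapping.keys (\<gamma> - t)"
  then have "Poly_Mapping.lookup \<gamma> x - Poly_Mapping.lookup t x \<noteq> 0" by (simp add: in_keys_iff lookup_minus)
  then show "x \<in> Poly_Mapping.keys \<gamma>" by (simp add: in_keys_iff)
qed

lemma tdeg_one_le: "tdeg \<gamma> = 1 \<Longrightarrow> Poly_Mapping.lookup \<gamma> i \<le> 1"
  using lookup_le_tdeg[of \<gamma> i] by simp

lemma mono_codim:
  assumes a_vars: "Poly_Mapping.keys a \<subseteq> {..<c}" and a_pos: "\<And>i. i < c \<Longrightarrow> 1 \<le> Poly_Mapping.lookup a i"
  shows "codim_AF c (Poly_Mapping.single a (1::'a::comm_ring_1))"
  unfolding codim_AF_def
proof (intro ballI impI)
  fix l :: "'a mpoly" assume l1: "l \<in> Rdeg c 1" and lA: "l \<in> Ann c (Poly_Mapping.single a 1)"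
  have z: "\<forall>\<gamma>. mdvd \<gamma> a \<longrightarrow> Poly_Mapping.lookup l \<gamma> = 0"
    using lA by (simp add: Ann_def contract_monomial_eq_0)
  have "Poly_Mapping.keys l = {}"
  proof (rule ccontr)
    assume "Poly_Mapping.keys l \<noteq> {}"
    then obtain \<gamma> where \<gamma>: "\<gamma> \<in> Poly_Mapping.keys l" by blast
    then have t: "tdeg \<gamma> = 1" and kv: "Poly_Mapping.keys \<gamma> \<subseteq> {..<c}"
      using l1 by (auto simp: Rdeg_def homog_def in_vars_def)
    have "mdvd \<gamma> a"
      unfolding mdvd_def
    proof
      fix i
      show "Poly_Mapping.lookup \<gamma> i \<le> Poly_Mapping.lookup a i"
      proof (cases "Poly_Mapping.lookup \<gamma> i = 0")
        case False
        then have "i \<in> Poly_Mapping.keys \<gamma>" by (simp add: in_keys_iff)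
        then have "i < c" using kv by auto
        then show ?thesis using a_pos tdeg_one_le[OF t, of i] by force
      qed simp
    qed
    then show False using z \<gamma> by (auto simp: in_keys_iff)
  qed
  then show "l = 0" by simp
qed

definition gens :: "(nat \<Rightarrow>\<^sub>0 nat) \<Rightarrow> nat \<Rightarrow> 'a::comm_ring_1 mpoly" where
  "gens a j = Poly_Mapping.single (Poly_Mapping.single j (Poly_Mapping.lookup a j + 1)) 1"

lemma mono_CI:
  assumes a_vars: "Poly_Mapping.keys a \<subseteq> {..<c}"
  shows "complete_intersection_AF c (Poly_Mapping.single a (1::'a::comm_ring_1))"
  unfolding complete_intersection_AF_def
proof (intro exI conjI)
  show "\<forall>j<c. in_vars c (gens a j :: 'a mpoly)"
    by (auto simp: gens_def in_vars_def)
  show "Ann c (Poly_Mapping.single a (1::'a)) = {\<Sum>j<c. h j * gens a j |h. \<forall>j<c. in_vars c (h j)}"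
  proof (rule equalityI)
   show "Ann c (Poly_Mapping.single a (1::'a)) \<subseteq> {\<Sum>j<c. h j * gens a j |h. \<forall>j<c. in_vars c (h j)}"
   proof (rule subsetI)
    fix g :: "'a mpoly" assume g: "g \<in> Ann c (Poly_Mapping.single a 1)"
    then have gv: "in_vars c g" and z: "\<forall>\<gamma>. mdvd \<gamma> a \<longrightarrow> Poly_Mapping.lookup g \<gamma> = 0"
      by (simp_all add: Ann_def contract_monomial_eq_0)
    define J where "J \<gamma> = (LEAST j. Poly_Mapping.lookup a j < Poly_Mapping.lookup \<gamma> j)" for \<gamma> :: "nat \<Rightarrow>\<^sub>0 nat"
    define s where "s j = Poly_Mapping.single j (Poly_Mapping.lookup a j + 1)" for j
    have J: "Poly_Mapping.lookup a (J \<gamma>) < Poly_Mapping.lookup \<gamma> (J \<gamma>) \<and> J \<gamma> < c"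
      if "\<gamma> \<in> Poly_Mapping.keys g" for \<gamma>
    proof -
      have "\<not> mdvd \<gamma> a" using z that by (auto simp: in_keys_iff)
      then have "\<exists>j. Poly_Mapping.lookup a j < Poly_Mapping.lookup \<gamma> j"
        by (auto simp: mdvd_def not_le)
      then have 1: "Poly_Mapping.lookup a (J \<gamma>) < Poly_Mapping.lookup \<gamma> (J \<gamma>)"
        unfolding J_def by (rule LeastI_ex)
      then have "J \<gamma> \<in> Poly_Mapping.keys \<gamma>" by (auto simp: in_keys_iff)
      then have "J \<gamma> < c" using gv that by (auto simp: in_vars_def)
      with 1 show ?thesis by simp
    qed
    have sdvd: "mdvd (s (J \<gamma>)) \<gamma>" if "\<gamma> \<in> Poly_Mapping.keys g" for \<gamma>
      using J[OF that] by (auto simp: mdvd_def s_def lookup_single when_def)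
    define h where "h j = (\<Sum>\<gamma>\<in>Poly_Mapping.keys g.
        if J \<gamma> = j then Poly_Mapping.single (\<gamma> - s j) (Poly_Mapping.lookup g \<gamma>) else 0)" for j
    have hv: "\<forall>j<c. in_vars c (h j)"
    proof (intro allI impI)
      fix j assume "j < c"
      show "in_vars c (h j)"
        unfolding h_def
      proof (intro in_vars_sum)
        fix \<gamma> assume "\<gamma> \<in> Poly_Mapping.keys g"
        then have "Poly_Mapping.keys \<gamma> \<subseteq> {..<c}" using gv by (auto simp: in_vars_def)
        then have "Poly_Mapping.keys (\<gamma> - s j) \<subseteq> {..<c}"
          using keys_diff_subset[of \<gamma> "s j"] by blast
        then show "in_vars c (if J \<gamma> = j then Poly_Mapping.single (\<gamma> - s j) (Poly_Mapping.lookup g \<gamma>) else 0)"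
          by (auto intro: in_vars_single)
      qed
    qed
    have "(\<Sum>j<c. h j * gens a j) = (\<Sum>j<c. \<Sum>\<gamma>\<in>Poly_Mapping.keys g.
        if J \<gamma> = j then Poly_Mapping.single \<gamma> (Poly_Mapping.lookup g \<gamma>) else 0)"
    proof (intro sum.cong refl)
      fix j
      show "h j * gens a j = (\<Sum>\<gamma>\<in>Poly_Mapping.keys g.
        if J \<gamma> = j then Poly_Mapping.single \<gamma> (Poly_Mapping.lookup g \<gamma>) else 0)"
        unfolding h_def sum_distrib_right
      proof (intro sum.cong refl)
        fix \<gamma> assume \<gamma>: "\<gamma> \<in> Poly_Mapping.keys g"
        show "(if J \<gamma> = j then Poly_Mapping.single (\<gamma> - s j) (Poly_Mapping.lookup g \<gamma>) else 0) * gens a j =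
          (if J \<gamma> = j then Poly_Mapping.single \<gamma> (Poly_Mapping.lookup g \<gamma>) else 0)"
          using sdvd[OF \<gamma>] mdvd_add_diff[of "s j" \<gamma>]
          by (auto simp: gens_def mult_single s_def add.commute)
      qed
    qed
    also have "\<dots> = (\<Sum>\<gamma>\<in>Poly_Mapping.keys g. \<Sum>j<c.
        if J \<gamma> = j then Poly_Mapping.single \<gamma> (Poly_Mapping.lookup g \<gamma>) else 0)"
      by (rule sum.swap)
    also have "\<dots> = (\<Sum>\<gamma>\<in>Poly_Mapping.keys g. Poly_Mapping.single \<gamma> (Poly_Mapping.lookup g \<gamma>))"
      by (intro sum.cong refl) (use J in \<open>auto simp: sum.delta'\<close>)
    also have "\<dots> = g" by (rule poly_expand[symmetric])
    finally have eq: "(\<Sum>j<c. h j * gens a j) = g" .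
    show "g \<in> {\<Sum>j<c. h j * gens a j |h. \<forall>j<c. in_vars c (h j)}"
      using hv eq by force
   qed
  next
   show "{\<Sum>j<c. h j * gens a j |h. \<forall>j<c. in_vars c (h j)} \<subseteq> Ann c (Poly_Mapping.single a (1::'a))"
   proof (rule subsetI)
    fix g :: "'a mpoly" assume "g \<in> {\<Sum>j<c. h j * gens a j |h. \<forall>j<c. in_vars c (h j)}"
    then obtain h where g: "g = (\<Sum>j<c. h j * gens a j)" and hv: "\<forall>j<c. in_vars c (h j)" by blast
    have "in_vars c g" unfolding g
      by (intro in_vars_sum in_vars_mult) (simp_all add: hv gens_def in_vars_single)
    moreover have "contract g (Poly_Mapping.single a 1) = 0"
    proof -
      have "contract (gens a j) (Poly_Mapping.single a (1::'a)) = 0" for j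
        unfolding gens_def contract_single_monomial by (auto simp: mdvd_def lookup_single when_def split: if_splits dest: spec[of _ j])
      then show ?thesis unfolding g contract_sum_left contract_mult by simp
    qed
    ultimately show "g \<in> Ann c (Poly_Mapping.single a 1)" by (simp add: Ann_def)
   qed
  qed
qed


section \<open>SLP in the monomial case\<close>

definition lsum :: "nat \<Rightarrow> 'a::comm_ring_1 mpoly" where "lsum c = (\<Sum>i<c. X i)"

definition wtf :: "(nat \<Rightarrow>\<^sub>0 nat) \<Rightarrow> nat \<Rightarrow> (nat \<Rightarrow>\<^sub>0 nat) \<Rightarrow> 'a::comm_ring_1" where
  "wtf a i \<beta> = of_nat (Poly_Mapping.lookup \<beta> i + 1) * (of_nat (Poly_Mapping.lookup a i) - of_nat (Poly_Mapping.lookup \<beta> i))"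

definition Fop :: "nat \<Rightarrow> (nat \<Rightarrow>\<^sub>0 nat) \<Rightarrow> 'a::comm_ring_1 mpoly \<Rightarrow> 'a mpoly" where
  "Fop c a H = (\<Sum>i<c. X i * Poly_Mapping.mapp (\<lambda>\<beta> v. wtf a i \<beta> * v) H)"

definition Vb :: "(nat \<Rightarrow>\<^sub>0 nat) \<Rightarrow> nat \<Rightarrow> 'a::zero mpoly set" where
  "Vb a m = {H. \<forall>\<beta>\<in>Poly_Mapping.keys H. mdvd \<beta> a \<and> tdeg \<beta> = m}"

definition ee :: "nat \<Rightarrow> (nat \<Rightarrow>\<^sub>0 nat)" where "ee i = Poly_Mapping.single i 1"

lemma lookup_ee: "Poly_Mapping.lookup (ee i) j = (if i = j then 1 else 0)"
  by (simp add: ee_def lookup_single when_def)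

lemma X_ee: "X i = Poly_Mapping.single (ee i) 1"
  by (simp add: X_def ee_def)

lemma tdeg_ee [simp]: "tdeg (ee i) = 1"
  by (simp add: ee_def)

lemma lookup_lsum_contract:
  "Poly_Mapping.lookup (contract (lsum c) H) \<beta> = (\<Sum>i<c. Poly_Mapping.lookup H (\<beta> + ee i))"
  by (simp add: lsum_def contract_sum_left lookup_sum contract_X_lookup ee_def)

lemma lookup_mapp_w:
  "Poly_Mapping.lookup (Poly_Mapping.mapp (\<lambda>\<beta> v. w \<beta> * v) (H::'a::comm_ring_1 mpoly)) \<beta> = w \<beta> * Poly_Mapping.lookup H \<beta>"
  by (simp add: lookup_mapp when_def in_keys_iff)

lemma mdvd_ee: "mdvd (ee i) \<gamma> \<longleftrightarrow> 1 \<le> Poly_Mapping.lookup \<gamma> i"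
  unfolding mdvd_def by (auto simp: lookup_ee)

lemma lookup_X_mult:
  "Poly_Mapping.lookup (X i * G) \<gamma> =
    (if 1 \<le> Poly_Mapping.lookup \<gamma> i then Poly_Mapping.lookup G (\<gamma> - ee i) else 0)"
  unfolding X_ee lookup_single_mult mdvd_ee by simp

lemma lookup_Fop:
  "Poly_Mapping.lookup (Fop c a H) \<gamma> =
    (\<Sum>i<c. if 1 \<le> Poly_Mapping.lookup \<gamma> i then wtf a i (\<gamma> - ee i) * Poly_Mapping.lookup H (\<gamma> - ee i) else 0)"
  unfolding Fop_def lookup_sum lookup_X_mult lookup_mapp_w ..

lemma lookup_pm_add_ee: "Poly_Mapping.lookup (\<beta> + ee i) j = Poly_Mapping.lookup \<beta> j + (if i = j then 1 else 0)"
  by (simp add: lookup_add lookup_ee)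

lemma lookup_pm_diff_ee: "Poly_Mapping.lookup (\<beta> - ee i) j = Poly_Mapping.lookup \<beta> j - (if i = j then 1 else 0)"
  by (simp add: lookup_minus lookup_ee)

lemma wtf_cong: "Poly_Mapping.lookup \<beta> i = Poly_Mapping.lookup \<beta>' i \<Longrightarrow> wtf a i \<beta> = wtf a i \<beta>'"
  by (simp add: wtf_def)

lemma comm_arith:
  fixes A b :: "'a::comm_ring_1"
  shows "(b + 1) * (A - b) * h - b * (A - b + 1) * h = (A - 2 * b) * h"
  by (simp add: algebra_simps)

lemma comm_term:
  fixes H :: "'a::comm_ring_1 mpoly"
  shows "(if 1 \<le> Poly_Mapping.lookup (\<beta> + ee i) j then wtf a j (\<beta> + ee i - ee j) * Poly_Mapping.lookup H (\<beta> + ee i - ee j) else 0)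
       - (if 1 \<le> Poly_Mapping.lookup \<beta> j then wtf a j (\<beta> - ee j) * Poly_Mapping.lookup H (\<beta> - ee j + ee i) else 0)
       = (if i = j then (of_nat (Poly_Mapping.lookup a i) - 2 * of_nat (Poly_Mapping.lookup \<beta> i)) * Poly_Mapping.lookup H \<beta> else 0)"
proof (cases "i = j")
  case True
  have e1: "\<beta> + ee i - ee i = \<beta>" by (rule add_diff_cancel_pm)
  have c1: "1 \<le> Poly_Mapping.lookup (\<beta> + ee i) i" by (simp add: lookup_pm_add_ee)
  have w1: "wtf a i \<beta> = (of_nat (Poly_Mapping.lookup \<beta> i) + 1) * (of_nat (Poly_Mapping.lookup a i) - of_nat (Poly_Mapping.lookup \<beta> i))"
    by (simp add: wtf_def add.commute)
  show ?thesis
  proof (cases "1 \<le> Poly_Mapping.lookup \<beta> i")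
    case True
    have e2: "\<beta> - ee i + ee i = \<beta>"
      by (rule poly_mapping_eqI) (use True in \<open>auto simp: lookup_add lookup_minus lookup_ee\<close>)
    have w2: "wtf a i (\<beta> - ee i) = of_nat (Poly_Mapping.lookup \<beta> i) * (of_nat (Poly_Mapping.lookup a i) - of_nat (Poly_Mapping.lookup \<beta> i) + 1)"
      using True by (simp add: wtf_def lookup_pm_diff_ee of_nat_diff algebra_simps)
    show ?thesis
      unfolding \<open>i = j\<close>[symmetric] using True
      by (simp only: c1 e1 e2 w1 w2 if_True comm_arith refl)
  next
    case False
    then have "Poly_Mapping.lookup \<beta> i = 0" by simp
    then show ?thesis unfolding \<open>i = j\<close>[symmetric] using c1 by (simp add: e1 w1)
  qed
next
  case False
  have l: "Poly_Mapping.lookup (\<beta> + ee i) j = Poly_Mapping.lookup \<beta> j"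
    using False by (simp add: lookup_pm_add_ee)
  show ?thesis
  proof (cases "1 \<le> Poly_Mapping.lookup \<beta> j")
    case True
    have e: "\<beta> + ee i - ee j = \<beta> - ee j + ee i"
      by (rule poly_mapping_eqI) (use True False in \<open>auto simp: lookup_add lookup_minus lookup_ee\<close>)
    have w: "wtf a j (\<beta> - ee j + ee i) = wtf a j (\<beta> - ee j)"
      by (rule wtf_cong) (use False in \<open>simp add: lookup_pm_diff_ee lookup_pm_add_ee\<close>)
    show ?thesis unfolding l e w using False True by simp
  next
    case False
    then show ?thesis using \<open>i \<noteq> j\<close> l by simp
  qed
qed

lemma comm_lookup:
  fixes H :: "'a::comm_ring_1 mpoly"
  shows "Poly_Mapping.lookup (contract (lsum c) (Fop c a H)) \<beta> - Poly_Mapping.lookup (Fop c a (contract (lsum c) H)) \<beta>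
     = (\<Sum>i<c. of_nat (Poly_Mapping.lookup a i) - 2 * of_nat (Poly_Mapping.lookup \<beta> i)) * Poly_Mapping.lookup H \<beta>"
proof -
  define T1 where "T1 i j = (if 1 \<le> Poly_Mapping.lookup (\<beta> + ee i) j then wtf a j (\<beta> + ee i - ee j) * Poly_Mapping.lookup H (\<beta> + ee i - ee j) else 0)" for i j
  define T2 where "T2 i j = (if 1 \<le> Poly_Mapping.lookup \<beta> j then wtf a j (\<beta> - ee j) * Poly_Mapping.lookup H (\<beta> - ee j + ee i) else (0::'a))" for i j
  have 1: "Poly_Mapping.lookup (contract (lsum c) (Fop c a H)) \<beta> = (\<Sum>i<c. \<Sum>j<c. T1 i j)"
    by (simp add: lookup_lsum_contract lookup_Fop T1_def)
  have "Poly_Mapping.lookup (Fop c a (contract (lsum c) H)) \<beta> = (\<Sum>j<c. \<Sum>i<c. T2 i j)"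
    unfolding lookup_Fop lookup_lsum_contract T2_def sum_distrib_left by (intro sum.cong refl) auto
  also have "\<dots> = (\<Sum>i<c. \<Sum>j<c. T2 i j)" by (rule sum.swap)
  finally have 2: "Poly_Mapping.lookup (Fop c a (contract (lsum c) H)) \<beta> = (\<Sum>i<c. \<Sum>j<c. T2 i j)" .
  have "(\<Sum>i<c. \<Sum>j<c. T1 i j) - (\<Sum>i<c. \<Sum>j<c. T2 i j) = (\<Sum>i<c. \<Sum>j<c. T1 i j - T2 i j)"
    by (simp add: sum_subtractf)
  also have "\<dots> = (\<Sum>i<c. \<Sum>j<c. if i = j then (of_nat (Poly_Mapping.lookup a i) - 2 * of_nat (Poly_Mapping.lookup \<beta> i)) * Poly_Mapping.lookup H \<beta> else 0)"
    unfolding T1_def T2_def comm_term ..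
  also have "\<dots> = (\<Sum>i<c. (of_nat (Poly_Mapping.lookup a i) - 2 * of_nat (Poly_Mapping.lookup \<beta> i)) * Poly_Mapping.lookup H \<beta>)"
    by (intro sum.cong refl) (simp add: sum.delta)
  also have "\<dots> = (\<Sum>i<c. of_nat (Poly_Mapping.lookup a i) - 2 * of_nat (Poly_Mapping.lookup \<beta> i)) * Poly_Mapping.lookup H \<beta>"
    by (simp add: sum_distrib_right)
  finally show ?thesis using 1 2 by simp
qed


lemma Fop_add: "Fop c a (x + y) = Fop c a x + Fop c a (y::'a::comm_ring_1 mpoly)"
proof (rule poly_mapping_eqI)
  fix \<gamma>
  show "Poly_Mapping.lookup (Fop c a (x + y)) \<gamma> = Poly_Mapping.lookup (Fop c a x + Fop c a y) \<gamma>"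
    unfolding lookup_add lookup_Fop sum.distrib[symmetric] by (intro sum.cong refl) (simp add: distrib_left)
qed

lemma Fop_C: "Fop c a (C b * x) = C b * Fop c a (x::'a::comm_ring_1 mpoly)"
proof (rule poly_mapping_eqI)
  fix \<gamma>
  show "Poly_Mapping.lookup (Fop c a (C b * x)) \<gamma> = Poly_Mapping.lookup (C b * Fop c a x) \<gamma>"
    unfolding lookup_C_mult lookup_Fop sum_distrib_left by (intro sum.cong refl) (simp add: mult.left_commute)
qed

lemma Vb_0: "0 \<in> Vb a m"
  by (simp add: Vb_def)

lemma Vb_add: "x \<in> Vb a m \<Longrightarrow> y \<in> Vb a m \<Longrightarrow> x + y \<in> Vb a m"
  unfolding Vb_def using keys_add[of x y] by blast

lemma Vb_C: "x \<in> Vb a m \<Longrightarrow> C b * (x::'a::comm_ring_1 mpoly) \<in> Vb a m"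
  unfolding Vb_def by (auto simp: in_keys_iff)

lemma mdvd_refl_add: "mdvd \<beta> (\<beta> + \<gamma>)"
  by (auto simp: mdvd_def lookup_add)

lemma e_Vb:
  assumes xV: "x \<in> Vb a m"
  shows "contract (lsum c) (x::'a::comm_ring_1 mpoly) \<in> Vb a (m - 1)"
  unfolding Vb_def
proof (intro CollectI ballI)
  fix \<beta> assume \<beta>: "\<beta> \<in> Poly_Mapping.keys (contract (lsum c) x)"
  have x: "\<forall>\<beta>\<in>Poly_Mapping.keys x. mdvd \<beta> a \<and> tdeg \<beta> = m" using xV by (simp add: Vb_def)
  from \<beta> have "(\<Sum>i<c. Poly_Mapping.lookup x (\<beta> + ee i)) \<noteq> 0"
    by (simp add: in_keys_iff lookup_lsum_contract)
  then obtain i where "i \<in> {..<c}" "Poly_Mapping.lookup x (\<beta> + ee i) \<noteq> 0"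
    by (rule sum.not_neutral_contains_not_neutral)
  then have "\<beta> + ee i \<in> Poly_Mapping.keys x" by (simp add: in_keys_iff)
  then have "mdvd (\<beta> + ee i) a" "tdeg (\<beta> + ee i) = m" using x by auto
  then show "mdvd \<beta> a \<and> tdeg \<beta> = m - 1"
    using mdvd_trans[OF mdvd_refl_add] by (auto simp: tdeg_add)
qed

lemma e_Vb0: "x \<in> Vb a 0 \<Longrightarrow> contract (lsum c) (x::'a::comm_ring_1 mpoly) = 0"
proof (rule poly_mapping_eqI)
  fix \<beta> assume x: "x \<in> Vb a 0"
  have "Poly_Mapping.lookup x (\<beta> + ee i) = 0" for i
  proof (rule ccontr)
    assume "Poly_Mapping.lookup x (\<beta> + ee i) \<noteq> 0"
    then have "\<beta> + ee i \<in> Poly_Mapping.keys x" by (simp add: in_keys_iff)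
    then have "tdeg (\<beta> + ee i) = 0" using x by (auto simp: Vb_def)
    then show False by (simp add: tdeg_add)
  qed
  then show "Poly_Mapping.lookup (contract (lsum c) x) \<beta> = Poly_Mapping.lookup 0 \<beta>"
    by (simp add: lookup_lsum_contract)
qed

lemma wtf_nonzero: "wtf a i \<beta> \<noteq> (0::'a::{comm_ring_1, ring_char_0}) \<Longrightarrow> Poly_Mapping.lookup a i \<noteq> Poly_Mapping.lookup \<beta> i"
  by (auto simp: wtf_def)

lemma f_Vb:
  assumes xV: "x \<in> Vb a m"
  shows "Fop c a (x::'a::field_char_0 mpoly) \<in> Vb a (Suc m)"
  unfolding Vb_def
proof (intro CollectI ballI)
  fix \<gamma> assume \<gamma>: "\<gamma> \<in> Poly_Mapping.keys (Fop c a x)"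
  have x: "\<forall>\<beta>\<in>Poly_Mapping.keys x. mdvd \<beta> a \<and> tdeg \<beta> = m" using xV by (simp add: Vb_def)
  from \<gamma> have "(\<Sum>i<c. if 1 \<le> Poly_Mapping.lookup \<gamma> i then wtf a i (\<gamma> - ee i) * Poly_Mapping.lookup x (\<gamma> - ee i) else 0) \<noteq> 0"
    by (simp add: in_keys_iff lookup_Fop)
  then obtain i where "i \<in> {..<c}" "(if 1 \<le> Poly_Mapping.lookup \<gamma> i then wtf a i (\<gamma> - ee i) * Poly_Mapping.lookup x (\<gamma> - ee i) else 0) \<noteq> (0::'a)"
    by (rule sum.not_neutral_contains_not_neutral)
  then have g1: "1 \<le> Poly_Mapping.lookup \<gamma> i" and w: "wtf a i (\<gamma> - ee i) \<noteq> (0::'a)"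
    and xg: "Poly_Mapping.lookup x (\<gamma> - ee i) \<noteq> 0"
    by (auto split: if_splits)
  from xg have "\<gamma> - ee i \<in> Poly_Mapping.keys x" by (simp add: in_keys_iff)
  then have d: "mdvd (\<gamma> - ee i) a" and t: "tdeg (\<gamma> - ee i) = m" using x by auto
  have ne: "Poly_Mapping.lookup a i \<noteq> Poly_Mapping.lookup \<gamma> i - 1"
    using wtf_nonzero[OF w] by (simp add: lookup_pm_diff_ee)
  have "mdvd \<gamma> a"
    unfolding mdvd_def
  proof
    fix j
    have "Poly_Mapping.lookup \<gamma> j - (if i = j then 1 else 0) \<le> Poly_Mapping.lookup a j"
      using d unfolding mdvd_def lookup_pm_diff_ee by blast
    then show "Poly_Mapping.lookup \<gamma> j \<le> Poly_Mapping.lookup a j"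
      using ne g1 by (cases "i = j") auto
  qed
  moreover have "tdeg \<gamma> = Suc m"
    using mdvd_tdeg[of "ee i" \<gamma>] g1 t by (simp add: mdvd_ee)
  ultimately show "mdvd \<gamma> a \<and> tdeg \<gamma> = Suc m" by simp
qed

lemma V_top_b: "tdeg a < m \<Longrightarrow> x \<in> Vb a m \<Longrightarrow> x = 0"
proof -
  assume m: "tdeg a < m" and x: "x \<in> Vb a m"
  have "Poly_Mapping.keys x = {}"
  proof (rule ccontr)
    assume "Poly_Mapping.keys x \<noteq> {}"
    then obtain \<beta> where "\<beta> \<in> Poly_Mapping.keys x" by blast
    then have "mdvd \<beta> a" "tdeg \<beta> = m" using x by (auto simp: Vb_def)
    then show False using mdvd_tdeg_le m by fastforce
  qed
  then show "x = 0" by simp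
qed

lemma comm_b:
  assumes a_vars: "Poly_Mapping.keys a \<subseteq> {..<c}" and x: "x \<in> Vb a m"
  shows "contract (lsum c) (Fop c a x) = Fop c a (contract (lsum c) x) + of_int (int (tdeg a) - 2 * int m) * (x::'a::comm_ring_1 mpoly)"
proof (rule poly_mapping_eqI)
  fix \<beta>
  have key: "(\<Sum>i<c. of_nat (Poly_Mapping.lookup a i) - 2 * of_nat (Poly_Mapping.lookup \<beta> i)) * Poly_Mapping.lookup x \<beta>
       = (of_int (int (tdeg a) - 2 * int m) :: 'a) * Poly_Mapping.lookup x \<beta>"
  proof (cases "\<beta> \<in> Poly_Mapping.keys x")
    case True
    then have d: "mdvd \<beta> a" and t: "tdeg \<beta> = m" using x by (auto simp: Vb_def)
    have kb: "Poly_Mapping.keys \<beta> \<subseteq> {..<c}"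
    proof
      fix i assume "i \<in> Poly_Mapping.keys \<beta>"
      then have "Poly_Mapping.lookup a i \<noteq> 0" using d unfolding mdvd_def
        by (metis in_keys_iff le_zero_eq)
      then have "i \<in> Poly_Mapping.keys a" by (simp add: in_keys_iff)
      then show "i \<in> {..<c}" using a_vars by blast
    qed
    have "(\<Sum>i<c. of_nat (Poly_Mapping.lookup a i) - 2 * of_nat (Poly_Mapping.lookup \<beta> i))
        = (of_nat (\<Sum>i<c. Poly_Mapping.lookup a i) - 2 * of_nat (\<Sum>i<c. Poly_Mapping.lookup \<beta> i) :: 'a)"
      by (simp add: sum_subtractf sum_distrib_left)
    also have "\<dots> = of_nat (tdeg a) - 2 * of_nat (tdeg \<beta>)"
      using tdeg_superset[OF _ a_vars] tdeg_superset[OF _ kb] by simp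
    finally show ?thesis using t by simp
  qed (simp add: in_keys_iff)
  have "Poly_Mapping.lookup (contract (lsum c) (Fop c a x)) \<beta> =
      Poly_Mapping.lookup (Fop c a (contract (lsum c) x)) \<beta> + (of_int (int (tdeg a) - 2 * int m) :: 'a) * Poly_Mapping.lookup x \<beta>"
    using comm_lookup[of c a x \<beta>] key by (simp add: algebra_simps)
  then show "Poly_Mapping.lookup (contract (lsum c) (Fop c a x)) \<beta> =
      Poly_Mapping.lookup (Fop c a (contract (lsum c) x) + of_int (int (tdeg a) - 2 * int m) * x) \<beta>"
    by (simp add: lookup_add of_int_C)
qed


lemma R2V:
  assumes g: "g \<in> Rdeg c i"
  shows "contract g (Poly_Mapping.single a (1::'a::comm_ring_1)) \<in> Vb a (tdeg a - i)"
  unfolding Vb_def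
proof (intro CollectI ballI)
  fix \<beta> assume "\<beta> \<in> Poly_Mapping.keys (contract g (Poly_Mapping.single a (1::'a)))"
  then have "(if mdvd \<beta> a then Poly_Mapping.lookup g (a - \<beta>) else 0) \<noteq> 0"
    by (simp add: in_keys_iff contract_monomial_lookup)
  then have d: "mdvd \<beta> a" and k: "a - \<beta> \<in> Poly_Mapping.keys g"
    by (auto simp: in_keys_iff split: if_splits)
  have "tdeg (a - \<beta>) = i" using g k by (simp add: Rdeg_def homog_def)
  then show "mdvd \<beta> a \<and> tdeg \<beta> = tdeg a - i" using mdvd_tdeg[OF d] d by simp
qed

lemma contract_high:
  assumes g: "g \<in> Rdeg c n" and n: "tdeg a < n"
  shows "contract g (Poly_Mapping.single a (1::'a::comm_ring_1)) = 0"
proof -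
  have "\<forall>\<gamma>. mdvd \<gamma> a \<longrightarrow> Poly_Mapping.lookup g \<gamma> = 0"
  proof (intro allI impI)
    fix \<gamma> assume d: "mdvd \<gamma> a"
    show "Poly_Mapping.lookup g \<gamma> = 0"
    proof (rule ccontr)
      assume "Poly_Mapping.lookup g \<gamma> \<noteq> 0"
      then have "\<gamma> \<in> Poly_Mapping.keys g" by (simp add: in_keys_iff)
      then have "tdeg \<gamma> = n" using g by (simp add: Rdeg_def homog_def)
      then show False using mdvd_tdeg_le[OF d] n by simp
    qed
  qed
  then show ?thesis by (simp add: contract_monomial_eq_0)
qed

lemma V2R:
  assumes a_vars: "Poly_Mapping.keys a \<subseteq> {..<c}" and H: "H \<in> Vb a m"
  shows "\<exists>g\<in>Rdeg c (tdeg a - m). contract g (Poly_Mapping.single a (1::'a::comm_ring_1)) = H"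
proof
  define g where "g = (\<Sum>\<beta>\<in>Poly_Mapping.keys H. Poly_Mapping.single (a - \<beta>) (Poly_Mapping.lookup H \<beta>))"
  have Hk: "mdvd \<beta> a \<and> tdeg \<beta> = m" if "\<beta> \<in> Poly_Mapping.keys H" for \<beta>
    using H that by (auto simp: Vb_def)
  show "contract g (Poly_Mapping.single a 1) = H"
  proof -
    have "contract g (Poly_Mapping.single a 1) =
      (\<Sum>\<beta>\<in>Poly_Mapping.keys H. Poly_Mapping.single \<beta> (Poly_Mapping.lookup H \<beta>))"
      unfolding g_def contract_sum_left
      by (intro sum.cong refl) (simp add: contract_single_monomial mdvd_diff mdvd_diff_self Hk)
    then show ?thesis using poly_expand[of H] by simp
  qed
  show "g \<in> Rdeg c (tdeg a - m)"
    unfolding Rdeg_iff g_def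
  proof
    show "in_vars c (\<Sum>\<beta>\<in>Poly_Mapping.keys H. Poly_Mapping.single (a - \<beta>) (Poly_Mapping.lookup H \<beta>))"
      by (intro in_vars_sum in_vars_single) (use keys_diff_subset a_vars in blast)
    show "homog (tdeg a - m) (\<Sum>\<beta>\<in>Poly_Mapping.keys H. Poly_Mapping.single (a - \<beta>) (Poly_Mapping.lookup H \<beta>))"
    proof (intro homog_sum)
      fix \<beta> assume "\<beta> \<in> Poly_Mapping.keys H"
      then have "tdeg (a - \<beta>) = tdeg a - m" using Hk mdvd_tdeg by fastforce
      then show "homog (tdeg a - m) (Poly_Mapping.single (a - \<beta>) (Poly_Mapping.lookup H \<beta>))"
        using homog_single[of "a - \<beta>"] by simp
    qed
  qed
qed

lemma lsum_Rdeg: "lsum c \<in> Rdeg c 1"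
  unfolding Rdeg_iff lsum_def by (intro conjI in_vars_sum homog_sum in_vars_X homog_X) simp_all

lemma mono_SLP:
  assumes a_vars: "Poly_Mapping.keys a \<subseteq> {..<c}"
  shows "strong_lefschetz_AF c (Poly_Mapping.single a (1::'a::field_char_0))"
  unfolding strong_lefschetz_AF_def
proof (intro bexI allI impI)
  let ?F = "Poly_Mapping.single a (1::'a)"
  let ?e = "contract (lsum c) :: 'a mpoly \<Rightarrow> 'a mpoly"
  let ?d = "tdeg a"
  have inj: "\<And>x m k. x \<in> Vb a m \<Longrightarrow> int ?d - 2 * int m + int k \<le> 0 \<Longrightarrow> (?e ^^ k) x = 0 \<Longrightarrow> x = 0"
    by (rule e_inj[where e = ?e and f = "Fop c a" and V = "Vb a" and N = "int ?d" and d = ?d])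
       (auto simp: contract_add_right contract_C_right Fop_add Fop_C Vb_0 Vb_add Vb_C e_Vb[unfolded One_nat_def] e_Vb0 f_Vb
             V_top_b comm_b[OF a_vars])
  have surj: "\<And>w m k. w \<in> Vb a m \<Longrightarrow> int k \<le> int ?d - 2 * int m \<Longrightarrow> \<exists>v\<in>Vb a (m + k). (?e ^^ k) v = w"
    by (rule e_surj[where e = ?e and f = "Fop c a" and V = "Vb a" and N = "int ?d" and d = ?d])
       (auto simp: contract_add_right contract_C_right Fop_add Fop_C Vb_0 Vb_add Vb_C e_Vb[unfolded One_nat_def] e_Vb0 f_Vb
             V_top_b comm_b[OF a_vars])
  have cpow: "contract (lsum c ^ k * g) ?F = (?e ^^ k) (contract g ?F)" for k g
    by (simp add: contract_mult contract_power)
  fix i k :: nat assume k: "1 \<le> k"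
  show "(\<forall>g\<in>Rdeg c i. lsum c ^ k * g \<in> Ann c ?F \<longrightarrow> g \<in> Ann c ?F) \<or>
        (\<forall>h\<in>Rdeg c (i + k). \<exists>g\<in>Rdeg c i. h - lsum c ^ k * g \<in> Ann c ?F)"
  proof (cases "2 * i + k \<le> ?d")
    case True
    have "\<forall>g\<in>Rdeg c i. lsum c ^ k * g \<in> Ann c ?F \<longrightarrow> g \<in> Ann c ?F"
    proof (intro ballI impI)
      fix g :: "'a mpoly" assume g: "g \<in> Rdeg c i" and A: "lsum c ^ k * g \<in> Ann c ?F"
      have V: "contract g ?F \<in> Vb a (?d - i)" by (rule R2V[OF g])
      have "(?e ^^ k) (contract g ?F) = 0" using A by (simp add: Ann_def cpow)
      moreover have "int ?d - 2 * int (?d - i) + int k \<le> 0" using True by simp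
      ultimately have "contract g ?F = 0" using inj[OF V] by blast
      then show "g \<in> Ann c ?F" using g by (simp add: Ann_def Rdeg_def)
    qed
    then show ?thesis by blast
  next
    case False
    have "\<forall>h\<in>Rdeg c (i + k). \<exists>g\<in>Rdeg c i. h - lsum c ^ k * g \<in> Ann c ?F"
    proof
      fix h :: "'a mpoly" assume h: "h \<in> Rdeg c (i + k)"
      have hv: "in_vars c h" using h by (simp add: Rdeg_def)
      show "\<exists>g\<in>Rdeg c i. h - lsum c ^ k * g \<in> Ann c ?F"
      proof (cases "?d < i + k")
        case True
        have "0 \<in> Rdeg c i" by (simp add: Rdeg_def)
        moreover have "h - lsum c ^ k * 0 \<in> Ann c ?F"
          using contract_high[OF h True] hv by (simp add: Ann_def)
        ultimately show ?thesis by blast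
      next
        case le: False
        have W: "contract h ?F \<in> Vb a (?d - (i + k))" by (rule R2V[OF h])
        have "int k \<le> int ?d - 2 * int (?d - (i + k))" using False le by simp
        then obtain v where v: "v \<in> Vb a (?d - (i + k) + k)" and ev: "(?e ^^ k) v = contract h ?F"
          using surj[OF W] by blast
        have e1: "?d - (i + k) + k = ?d - i" using le by simp
        have e2: "?d - (?d - i) = i" using le by simp
        obtain g where g: "g \<in> Rdeg c i" and cg: "contract g ?F = v"
          using V2R[OF a_vars v] unfolding e1 e2 by blast
        have "contract (h - lsum c ^ k * g) ?F = 0"
          by (simp add: contract_diff_left cpow cg ev)
        moreover have "in_vars c (h - lsum c ^ k * g)"
          using hv g lsum_Rdeg by (auto intro!: in_vars_diff in_vars_mult in_vars_power simp: Rdeg_def)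
        ultimately show ?thesis using g by (auto simp: Ann_def)
      qed
    qed
    then show ?thesis by blast
  qed
next
  show "lsum c \<in> Rdeg c 1" by (rule lsum_Rdeg)
qed


section \<open>Transfer along a ring automorphism\<close>

context
  fixes \<phi> \<phi>' :: "'a::comm_ring_1 mpoly \<Rightarrow> 'a mpoly" and c :: nat and F F0 :: "'a mpoly"
  assumes ph_mult: "\<And>p q. \<phi> (p * q) = \<phi> p * \<phi> q"
    and ph_add: "\<And>p q. \<phi> (p + q) = \<phi> p + \<phi> q"
    and ph'_mult: "\<And>p q. \<phi>' (p * q) = \<phi>' p * \<phi>' q"
    and ph'_add: "\<And>p q. \<phi>' (p + q) = \<phi>' p + \<phi>' q"
    and inv1: "\<And>p. \<phi>' (\<phi> p) = p"
    and inv2: "\<And>p. \<phi> (\<phi>' p) = p"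
    and ph_Rdeg: "\<And>p i. p \<in> Rdeg c i \<Longrightarrow> \<phi> p \<in> Rdeg c i"
    and ph'_Rdeg: "\<And>p i. p \<in> Rdeg c i \<Longrightarrow> \<phi>' p \<in> Rdeg c i"
    and ph_vars: "\<And>p. in_vars c p \<Longrightarrow> in_vars c (\<phi> p)"
    and ph'_vars: "\<And>p. in_vars c p \<Longrightarrow> in_vars c (\<phi>' p)"
    and ph_Ann: "\<And>g. in_vars c g \<Longrightarrow> (contract g F = 0 \<longleftrightarrow> contract (\<phi> g) F0 = 0)"
begin

lemma ph_zero: "\<phi> 0 = 0"
  using ph_add[of 0 0] by simp

lemma ph_diff: "\<phi> (p - q) = \<phi> p - \<phi> q"
  using ph_add[of "p - q" q] by (simp add: algebra_simps)

lemma ph_one: "\<phi> 1 = 1"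
proof -
  have "\<phi> 1 * \<phi> (\<phi>' 1) = \<phi> (1 * \<phi>' 1)" by (simp only: ph_mult)
  then show ?thesis by (simp add: inv2)
qed

lemma ph_power: "\<phi> (p ^ k) = \<phi> p ^ k"
  by (induction k) (simp_all add: ph_one ph_mult)

lemma ph'_zero: "\<phi>' 0 = 0"
  using ph'_add[of 0 0] by simp

lemma ph_sum: "\<phi> (\<Sum>j\<in>J. f j) = (\<Sum>j\<in>J. \<phi> (f j))"
  by (induction J rule: infinite_finite_induct) (simp_all add: ph_zero ph_add)

lemma ph'_sum: "\<phi>' (\<Sum>j\<in>J. f j) = (\<Sum>j\<in>J. \<phi>' (f j))"
  by (induction J rule: infinite_finite_induct) (simp_all add: ph'_zero ph'_add)

lemma Ann_iff: "g \<in> Ann c F \<longleftrightarrow> in_vars c g \<and> \<phi> g \<in> Ann c F0"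
  using ph_Ann ph_vars by (auto simp: Ann_def)

lemma transfer_artinian: "artinian_AF c F0 \<Longrightarrow> artinian_AF c F"
  unfolding artinian_AF_def
proof -
  assume "\<exists>N. \<forall>n\<ge>N. Rdeg c n \<subseteq> Ann c F0"
  then obtain N where N: "\<forall>n\<ge>N. Rdeg c n \<subseteq> Ann c F0" by blast
  have "\<forall>n\<ge>N. Rdeg c n \<subseteq> Ann c F"
  proof (intro allI impI subsetI)
    fix n and g :: "'a mpoly" assume "N \<le> n" "g \<in> Rdeg c n"
    then show "g \<in> Ann c F" using N ph_Rdeg[of g n] by (auto simp: Ann_iff Rdeg_def)
  qed
  then show "\<exists>N. \<forall>n\<ge>N. Rdeg c n \<subseteq> Ann c F" by blast
qed

lemma transfer_codim: "codim_AF c F0 \<Longrightarrow> codim_AF c F"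
  unfolding codim_AF_def
proof (intro ballI impI)
  fix l :: "'a mpoly" assume h: "\<forall>l\<in>Rdeg c 1. l \<in> Ann c F0 \<longrightarrow> l = 0" and l: "l \<in> Rdeg c 1" and lA: "l \<in> Ann c F"
  have "\<phi> l = 0" using h ph_Rdeg[OF l] lA by (auto simp: Ann_iff)
  then show "l = 0" using inv1[of l] by (simp add: ph'_zero)
qed

lemma transfer_CI: "complete_intersection_AF c F0 \<Longrightarrow> complete_intersection_AF c F"
  unfolding complete_intersection_AF_def
proof -
  assume "\<exists>g. (\<forall>j<c. in_vars c (g j)) \<and> Ann c F0 = {\<Sum>j<c. h j * g j |h. \<forall>j<c. in_vars c (h j)}"
  then obtain g0 where g0v: "\<forall>j<c. in_vars c (g0 j)"
    and A0: "Ann c F0 = {\<Sum>j<c. h j * g0 j |h. \<forall>j<c. in_vars c (h j)}" by blast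
  define g where "g j = \<phi>' (g0 j)" for j
  have gv: "\<forall>j<c. in_vars c (g j)" using g0v ph'_vars by (simp add: g_def)
  have "Ann c F = {\<Sum>j<c. h j * g j |h. \<forall>j<c. in_vars c (h j)}"
  proof (rule equalityI)
    show "Ann c F \<subseteq> {\<Sum>j<c. h j * g j |h. \<forall>j<c. in_vars c (h j)}"
    proof (rule subsetI)
      fix x :: "'a mpoly" assume "x \<in> Ann c F"
      then have "\<phi> x \<in> Ann c F0" by (simp add: Ann_iff)
      then obtain h where h: "\<phi> x = (\<Sum>j<c. h j * g0 j)" and hv: "\<forall>j<c. in_vars c (h j)"
        using A0 by blast
      have "x = \<phi>' (\<phi> x)" by (simp add: inv1)
      also have "\<dots> = (\<Sum>j<c. \<phi>' (h j) * g j)" by (simp add: h ph'_sum ph'_mult g_def)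
      finally have xe: "x = (\<Sum>j<c. \<phi>' (h j) * g j)" .
      have hv': "\<forall>j<c. in_vars c (\<phi>' (h j))" using hv ph'_vars by blast
      show "x \<in> {\<Sum>j<c. h j * g j |h. \<forall>j<c. in_vars c (h j)}"
        by (intro CollectI exI[where x="\<lambda>j. \<phi>' (h j)"] conjI) (simp_all add: xe hv')
    qed
  next
    show "{\<Sum>j<c. h j * g j |h. \<forall>j<c. in_vars c (h j)} \<subseteq> Ann c F"
    proof (rule subsetI)
      fix x :: "'a mpoly" assume "x \<in> {\<Sum>j<c. h j * g j |h. \<forall>j<c. in_vars c (h j)}"
      then obtain h where x: "x = (\<Sum>j<c. h j * g j)" and hv: "\<forall>j<c. in_vars c (h j)" by blast
      have "in_vars c x" unfolding x using hv gv by (intro in_vars_sum in_vars_mult) auto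
      moreover have xe: "\<phi> x = (\<Sum>j<c. \<phi> (h j) * g0 j)" by (simp add: x ph_sum ph_mult g_def inv2)
      have hv': "\<forall>j<c. in_vars c (\<phi> (h j))" using hv ph_vars by blast
      have "\<phi> x \<in> Ann c F0" unfolding A0
        by (intro CollectI exI[where x="\<lambda>j. \<phi> (h j)"] conjI) (simp_all add: xe hv')
      ultimately show "x \<in> Ann c F" by (simp add: Ann_iff)
    qed
  qed
  then show "\<exists>g. (\<forall>j<c. in_vars c (g j)) \<and> Ann c F = {\<Sum>j<c. h j * g j |h. \<forall>j<c. in_vars c (h j)}"
    using gv by blast
qed

lemma transfer_SLP: "strong_lefschetz_AF c F0 \<Longrightarrow> strong_lefschetz_AF c F"
  unfolding strong_lefschetz_AF_def
proof -
  assume "\<exists>l\<in>Rdeg c 1. \<forall>i k. 1 \<le> k \<longrightarrow>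
        (\<forall>g\<in>Rdeg c i. l ^ k * g \<in> Ann c F0 \<longrightarrow> g \<in> Ann c F0) \<or>
        (\<forall>h\<in>Rdeg c (i + k). \<exists>g\<in>Rdeg c i. h - l ^ k * g \<in> Ann c F0)"
  then obtain l where l: "l \<in> Rdeg c 1" and L: "\<And>i k. 1 \<le> k \<Longrightarrow>
        (\<forall>g\<in>Rdeg c i. l ^ k * g \<in> Ann c F0 \<longrightarrow> g \<in> Ann c F0) \<or>
        (\<forall>h\<in>Rdeg c (i + k). \<exists>g\<in>Rdeg c i. h - l ^ k * g \<in> Ann c F0)" by blast
  have pl: "\<phi> (\<phi>' l ^ k * g) = l ^ k * \<phi> g" for k g by (simp add: ph_mult ph_power inv2)
  have "\<forall>i k. 1 \<le> k \<longrightarrow>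
        (\<forall>g\<in>Rdeg c i. \<phi>' l ^ k * g \<in> Ann c F \<longrightarrow> g \<in> Ann c F) \<or>
        (\<forall>h\<in>Rdeg c (i + k). \<exists>g\<in>Rdeg c i. h - \<phi>' l ^ k * g \<in> Ann c F)"
  proof (intro allI impI)
    fix i k :: nat assume k: "1 \<le> k"
    show "(\<forall>g\<in>Rdeg c i. \<phi>' l ^ k * g \<in> Ann c F \<longrightarrow> g \<in> Ann c F) \<or>
        (\<forall>h\<in>Rdeg c (i + k). \<exists>g\<in>Rdeg c i. h - \<phi>' l ^ k * g \<in> Ann c F)"
    proof (cases "\<forall>g\<in>Rdeg c i. l ^ k * g \<in> Ann c F0 \<longrightarrow> g \<in> Ann c F0")
      case True
      have "\<forall>g\<in>Rdeg c i. \<phi>' l ^ k * g \<in> Ann c F \<longrightarrow> g \<in> Ann c F"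
      proof (intro ballI impI)
        fix g :: "'a mpoly" assume g: "g \<in> Rdeg c i" and A: "\<phi>' l ^ k * g \<in> Ann c F"
        then have "l ^ k * \<phi> g \<in> Ann c F0" using pl by (simp add: Ann_iff)
        then have "\<phi> g \<in> Ann c F0" using True ph_Rdeg[OF g] by blast
        then show "g \<in> Ann c F" using g by (simp add: Ann_iff Rdeg_def)
      qed
      then show ?thesis by blast
    next
      case False
      then have S: "\<forall>h\<in>Rdeg c (i + k). \<exists>g\<in>Rdeg c i. h - l ^ k * g \<in> Ann c F0" using L[OF k] by blast
      have "\<forall>h\<in>Rdeg c (i + k). \<exists>g\<in>Rdeg c i. h - \<phi>' l ^ k * g \<in> Ann c F"
      proof
        fix h :: "'a mpoly" assume h: "h \<in> Rdeg c (i + k)"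
        then obtain g0 where g0: "g0 \<in> Rdeg c i" and A: "\<phi> h - l ^ k * g0 \<in> Ann c F0"
          using S ph_Rdeg[OF h] by blast
        have "\<phi>' g0 \<in> Rdeg c i" using ph'_Rdeg[OF g0] .
        moreover have "h - \<phi>' l ^ k * \<phi>' g0 \<in> Ann c F"
        proof -
          have "\<phi> (h - \<phi>' l ^ k * \<phi>' g0) = \<phi> h - l ^ k * g0" by (simp add: ph_diff pl inv2)
          moreover have "in_vars c (h - \<phi>' l ^ k * \<phi>' g0)"
            using h l ph'_Rdeg[OF l] ph'_Rdeg[OF g0]
            by (auto intro!: in_vars_diff in_vars_mult in_vars_power simp: Rdeg_def)
          ultimately show ?thesis using A by (simp add: Ann_iff)
        qed
        ultimately show "\<exists>g\<in>Rdeg c i. h - \<phi>' l ^ k * g \<in> Ann c F" by blast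
      qed
      then show ?thesis by blast
    qed
  qed
  moreover have "\<phi>' l \<in> Rdeg c 1" by (rule ph'_Rdeg[OF l])
  ultimately show "\<exists>l\<in>Rdeg c 1. \<forall>i k. 1 \<le> k \<longrightarrow>
        (\<forall>g\<in>Rdeg c i. l ^ k * g \<in> Ann c F \<longrightarrow> g \<in> Ann c F) \<or>
        (\<forall>h\<in>Rdeg c (i + k). \<exists>g\<in>Rdeg c i. h - l ^ k * g \<in> Ann c F)" by blast
qed

end


definition lin_ext :: "((nat \<Rightarrow>\<^sub>0 nat) \<Rightarrow> 'a::comm_ring_1 mpoly) \<Rightarrow> 'a mpoly \<Rightarrow> 'a mpoly" where
  "lin_ext M g = (\<Sum>\<gamma>\<in>Poly_Mapping.keys g. C (Poly_Mapping.lookup g \<gamma>) * M \<gamma>)"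

lemma lin_ext_superset:
  assumes "finite S" "Poly_Mapping.keys g \<subseteq> S"
  shows "lin_ext M g = (\<Sum>\<gamma>\<in>S. C (Poly_Mapping.lookup g \<gamma>) * M \<gamma>)"
  unfolding lin_ext_def using assms
  by (intro sum.mono_neutral_left) (auto simp: in_keys_iff)

lemma lin_ext_add: "lin_ext M (p + q) = lin_ext M p + lin_ext M q"
proof -
  let ?S = "Poly_Mapping.keys p \<union> Poly_Mapping.keys q"
  have k: "Poly_Mapping.keys (p + q) \<subseteq> ?S" by (rule keys_add)
  show ?thesis
    unfolding lin_ext_superset[OF _ k, simplified] lin_ext_superset[of ?S p, simplified]
      lin_ext_superset[of ?S q, simplified]
    by (simp add: lookup_add C_add distrib_right sum.distrib)
qed

lemma lin_ext_zero [simp]: "lin_ext M 0 = 0"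
  by (simp add: lin_ext_def)

lemma lin_ext_sum: "lin_ext M (\<Sum>i\<in>I. f i) = (\<Sum>i\<in>I. lin_ext M (f i))"
  by (induction I rule: infinite_finite_induct) (simp_all add: lin_ext_add)

lemma lin_ext_single: "lin_ext M (Poly_Mapping.single \<gamma> a) = C a * M \<gamma>"
  by (cases "a = 0") (simp_all add: lin_ext_def)

lemma lin_ext_C_mult: "lin_ext M (C a * p) = C a * lin_ext M p"
proof -
  have k: "Poly_Mapping.keys (C a * p) \<subseteq> Poly_Mapping.keys p" by (auto simp: in_keys_iff)
  have "lin_ext M (C a * p) = (\<Sum>\<gamma>\<in>Poly_Mapping.keys p. C (Poly_Mapping.lookup (C a * p) \<gamma>) * M \<gamma>)"
    by (rule lin_ext_superset[OF finite_keys k])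
  then show ?thesis
    by (simp add: lin_ext_def sum_distrib_left mult.assoc flip: C_mult_C)
qed

lemma lin_ext_mult:
  assumes M: "\<And>\<gamma> \<gamma>'. M (\<gamma> + \<gamma>') = M \<gamma> * M \<gamma>'"
  shows "lin_ext M (p * q) = lin_ext M p * lin_ext M q"
proof -
  have "lin_ext M (p * q) = (\<Sum>\<gamma>\<in>Poly_Mapping.keys p. \<Sum>\<gamma>'\<in>Poly_Mapping.keys q.
      C (Poly_Mapping.lookup p \<gamma>) * M \<gamma> * (C (Poly_Mapping.lookup q \<gamma>') * M \<gamma>'))"
    by (subst mult_expand) (simp add: lin_ext_sum lin_ext_single M mult_ac flip: C_mult_C)
  also have "\<dots> = lin_ext M p * lin_ext M q"
    by (simp add: lin_ext_def sum_product)
  finally show ?thesis .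
qed

lemma mpoly_induct [case_names add mult const var]:
  fixes P :: "'a::comm_ring_1 mpoly \<Rightarrow> bool"
  assumes add: "\<And>p q. P p \<Longrightarrow> P q \<Longrightarrow> P (p + q)"
    and mult: "\<And>p q. P p \<Longrightarrow> P q \<Longrightarrow> P (p * q)"
    and const: "\<And>a. P (C a)"
    and var: "\<And>i. P (X i)"
  shows "P g"
proof -
  have mono: "P (Poly_Mapping.single \<gamma> 1)" for \<gamma>
  proof (induction "tdeg \<gamma>" arbitrary: \<gamma>)
    case 0
    then have "\<gamma> = 0" by (simp add: tdeg_eq_0_iff)
    then show ?case using const[of 1] by (simp add: C_def)
  next
    case (Suc n)
    then have "\<gamma> \<noteq> 0" by auto
    then obtain i where i: "i \<in> Poly_Mapping.keys \<gamma>" by (metis keys_eq_empty all_not_in_conv)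
    then have d: "mdvd (ee i) \<gamma>" by (simp add: mdvd_ee in_keys_iff)
    have "tdeg (\<gamma> - ee i) = n" using mdvd_tdeg[OF d] Suc.hyps(2) by simp
    then have "P (Poly_Mapping.single (\<gamma> - ee i) 1)" using Suc.hyps(1) by blast
    moreover have "Poly_Mapping.single \<gamma> 1 = Poly_Mapping.single (\<gamma> - ee i) 1 * X i"
      using mdvd_add_diff[OF d] by (simp add: X_ee mult_single add.commute)
    ultimately show ?case using mult var by metis
  qed
  have sums: "P (\<Sum>\<gamma>\<in>S. C (f \<gamma>) * Poly_Mapping.single \<gamma> 1)" for S f
  proof (induction S rule: infinite_finite_induct)
    case (infinite A)
    then show ?case using const[of 0] by simp
  next
    case empty
    then show ?case using const[of 0] by simp
  next
    case (insert x F)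
    then show ?case using add mult const mono by simp
  qed
  have "g = (\<Sum>\<gamma>\<in>Poly_Mapping.keys g. C (Poly_Mapping.lookup g \<gamma>) * Poly_Mapping.single \<gamma> 1)"
    by (subst poly_expand) (simp add: C_def mult_single)
  then show ?thesis using sums by metis
qed

definition rest :: "(nat \<Rightarrow>\<^sub>0 nat) \<Rightarrow> (nat \<Rightarrow>\<^sub>0 nat)" where
  "rest \<gamma> = \<gamma> - Poly_Mapping.single 0 (Poly_Mapping.lookup \<gamma> 0)"

lemma lookup_rest: "Poly_Mapping.lookup (rest \<gamma>) j = (if j = 0 then 0 else Poly_Mapping.lookup \<gamma> j)"
  by (simp add: rest_def lookup_minus lookup_single when_def)

lemma rest_add: "rest (\<gamma> + \<gamma>') = rest \<gamma> + rest \<gamma>'"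
  by (rule poly_mapping_eqI) (simp add: lookup_rest lookup_add)

lemma tdeg_rest: "tdeg \<gamma> = Poly_Mapping.lookup \<gamma> 0 + tdeg (rest \<gamma>)"
proof -
  have "\<gamma> = Poly_Mapping.single 0 (Poly_Mapping.lookup \<gamma> 0) + rest \<gamma>"
    by (rule poly_mapping_eqI) (simp add: lookup_rest lookup_add lookup_single when_def)
  then show ?thesis by (metis tdeg_add tdeg_single)
qed

definition Msub :: "'a::comm_ring_1 \<Rightarrow> (nat \<Rightarrow>\<^sub>0 nat) \<Rightarrow> 'a mpoly" where
  "Msub t \<gamma> = (X 0 + C t * X 1) ^ (Poly_Mapping.lookup \<gamma> 0) * Poly_Mapping.single (rest \<gamma>) 1"

definition sub :: "'a::comm_ring_1 \<Rightarrow> 'a mpoly \<Rightarrow> 'a mpoly" where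
  "sub t = lin_ext (Msub t)"

lemma Msub_add: "Msub t (\<gamma> + \<gamma>') = Msub t \<gamma> * Msub t \<gamma>'"
proof -
  have "Poly_Mapping.single (rest \<gamma> + rest \<gamma>') (1::'a) = Poly_Mapping.single (rest \<gamma>) 1 * Poly_Mapping.single (rest \<gamma>') 1"
    by (simp add: mult_single)
  then show ?thesis by (simp add: Msub_def lookup_add power_add rest_add mult_ac)
qed

lemma sub_add: "sub t (p + q) = sub t p + sub t q"
  by (simp add: sub_def lin_ext_add)

lemma sub_mult: "sub t (p * q) = sub t p * sub t q"
  by (simp add: sub_def lin_ext_mult Msub_add)

lemma sub_C: "sub t (C a) = C a"
proof -
  have "rest 0 = 0" by (rule poly_mapping_eqI) (simp add: lookup_rest)
  then show ?thesis by (simp add: sub_def C_def[of a] lin_ext_single Msub_def)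
qed

lemma sub_X0: "sub t (X 0) = X 0 + C t * X 1"
proof -
  have "rest (ee 0) = 0" by (rule poly_mapping_eqI) (simp add: lookup_rest lookup_ee)
  then show ?thesis by (simp add: sub_def X_ee[of 0] lin_ext_single Msub_def lookup_ee)
qed

lemma sub_Xj: "j \<noteq> 0 \<Longrightarrow> sub t (X j) = X j"
proof -
  assume j: "j \<noteq> 0"
  have "rest (ee j) = ee j" by (rule poly_mapping_eqI) (use j in \<open>simp add: lookup_rest lookup_ee\<close>)
  then show ?thesis using j by (simp add: sub_def X_ee lin_ext_single Msub_def lookup_ee)
qed

lemma sub_inv: "sub (- t) (sub t g) = g"
proof (induction g rule: mpoly_induct)
  case (add p q)
  then show ?case by (simp add: sub_add)
next
  case (mult p q)
  then show ?case by (simp add: sub_mult)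
next
  case (const a)
  then show ?case by (simp add: sub_C)
next
  case (var i)
  show ?case
  proof (cases "i = 0")
    case True
    have "sub (- t) (X 0 + C t * X 1) = X 0 + C (- t) * X 1 + C t * X 1"
      by (simp add: sub_add sub_mult sub_X0 sub_Xj sub_C)
    also have "\<dots> = X 0" by (simp add: add.assoc flip: distrib_right C_add)
    finally show ?thesis using True by (simp add: sub_X0)
  next
    case False
    then show ?thesis by (simp add: sub_Xj)
  qed
qed

lemma sub_in_vars:
  assumes c: "2 \<le> c" and g: "in_vars c g"
  shows "in_vars c (sub t g)"
  unfolding sub_def lin_ext_def Msub_def
proof (intro in_vars_sum in_vars_mult in_vars_C in_vars_power in_vars_add in_vars_single)
  show "in_vars c (X 0)" "in_vars c (X 1)" using c by (simp_all add: in_vars_X)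
  fix \<gamma> assume "\<gamma> \<in> Poly_Mapping.keys g"
  then have "Poly_Mapping.keys \<gamma> \<subseteq> {..<c}" using g by (auto simp: in_vars_def)
  then show "Poly_Mapping.keys (rest \<gamma>) \<subseteq> {..<c}"
  proof -
    assume kg: "Poly_Mapping.keys \<gamma> \<subseteq> {..<c}"
    have "Poly_Mapping.keys (rest \<gamma>) \<subseteq> Poly_Mapping.keys \<gamma>"
    proof
      fix x assume "x \<in> Poly_Mapping.keys (rest \<gamma>)"
      then have "Poly_Mapping.lookup (rest \<gamma>) x \<noteq> 0" by (simp add: in_keys_iff)
      then show "x \<in> Poly_Mapping.keys \<gamma>" by (simp add: in_keys_iff lookup_rest split: if_splits)
    qed
    then show ?thesis using kg by blast
  qed
qed

lemma homog_lin: "homog 1 (X 0 + C t * X 1)"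
  by (intro homog_add homog_C_mult homog_X)

lemma sub_homog:
  assumes g: "homog i g"
  shows "homog i (sub t g)"
  unfolding sub_def lin_ext_def
proof (intro homog_sum homog_C_mult)
  fix \<gamma> assume "\<gamma> \<in> Poly_Mapping.keys g"
  then have t: "tdeg \<gamma> = i" using g by (simp add: homog_def)
  have "homog (Poly_Mapping.lookup \<gamma> 0 * 1 + tdeg (rest \<gamma>)) (Msub t \<gamma>)"
    unfolding Msub_def by (intro homog_mult homog_power homog_lin homog_single)
  then show "homog i (Msub t \<gamma>)" using t tdeg_rest[of \<gamma>] by simp
qed

lemma sub_Rdeg: "2 \<le> c \<Longrightarrow> g \<in> Rdeg c i \<Longrightarrow> sub t g \<in> Rdeg c i"
  by (simp add: Rdeg_def sub_in_vars sub_homog)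


section \<open>The dual substitution\<close>

definition shf :: "(nat \<Rightarrow>\<^sub>0 nat) \<Rightarrow> nat \<Rightarrow> (nat \<Rightarrow>\<^sub>0 nat)" where
  "shf \<beta> j = \<beta> - Poly_Mapping.single 0 j + Poly_Mapping.single 1 j"

lemma lookup_shf:
  "Poly_Mapping.lookup (shf \<beta> j) k =
    (if k = 0 then Poly_Mapping.lookup \<beta> 0 - j else if k = 1 then Poly_Mapping.lookup \<beta> 1 + j else Poly_Mapping.lookup \<beta> k)"
  by (simp add: shf_def lookup_add lookup_minus lookup_single when_def)

definition Psi_fun :: "'a::comm_ring_1 mpoly \<Rightarrow> (nat \<Rightarrow>\<^sub>0 nat) \<Rightarrow> 'a" where
  "Psi_fun H \<beta> = (\<Sum>j\<le>Poly_Mapping.lookup \<beta> 0. of_nat (Poly_Mapping.lookup \<beta> 0 choose j) * Poly_Mapping.lookup H (shf \<beta> j))"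

lemma Psi_fun_finite: "finite {\<beta>. Psi_fun H \<beta> \<noteq> 0}"
proof -
  let ?g = "\<lambda>(\<alpha>, j). \<alpha> + Poly_Mapping.single 0 j - Poly_Mapping.single 1 j"
  have "{\<beta>. Psi_fun H \<beta> \<noteq> 0} \<subseteq> ?g ` (SIGMA \<alpha>:Poly_Mapping.keys H. {..Poly_Mapping.lookup \<alpha> 1})"
  proof
    fix \<beta> assume "\<beta> \<in> {\<beta>. Psi_fun H \<beta> \<noteq> 0}"
    then have "(\<Sum>j\<le>Poly_Mapping.lookup \<beta> 0. of_nat (Poly_Mapping.lookup \<beta> 0 choose j) * Poly_Mapping.lookup H (shf \<beta> j)) \<noteq> 0"
      by (simp add: Psi_fun_def)
    then obtain j where j: "j \<in> {..Poly_Mapping.lookup \<beta> 0}"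
      and nz: "of_nat (Poly_Mapping.lookup \<beta> 0 choose j) * Poly_Mapping.lookup H (shf \<beta> j) \<noteq> 0"
      by (rule sum.not_neutral_contains_not_neutral)
    have "shf \<beta> j \<in> Poly_Mapping.keys H" using nz by (auto simp: in_keys_iff)
    moreover have "j \<le> Poly_Mapping.lookup (shf \<beta> j) 1" by (simp add: lookup_shf)
    moreover have "?g (shf \<beta> j, j) = \<beta>"
      by (rule poly_mapping_eqI) (use j in \<open>auto simp: lookup_add lookup_minus lookup_single when_def lookup_shf\<close>)
    ultimately show "\<beta> \<in> ?g ` (SIGMA \<alpha>:Poly_Mapping.keys H. {..Poly_Mapping.lookup \<alpha> 1})"
      by (metis (no_types, lifting) SigmaI atMost_iff image_eqI)
  qed
  then show ?thesis by (rule finite_subset) auto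
qed

definition Psi :: "'a::comm_ring_1 mpoly \<Rightarrow> 'a mpoly" where
  "Psi H = Abs_poly_mapping (Psi_fun H)"

lemma lookup_Psi:
  "Poly_Mapping.lookup (Psi H) \<beta> =
     (\<Sum>j\<le>Poly_Mapping.lookup \<beta> 0. of_nat (Poly_Mapping.lookup \<beta> 0 choose j) * Poly_Mapping.lookup H (shf \<beta> j))"
  unfolding Psi_def using Psi_fun_finite[of H] by (simp add: Psi_fun_def)

lemma Psi_add: "Psi (H + G) = Psi H + Psi G"
  by (rule poly_mapping_eqI) (simp add: lookup_Psi lookup_add distrib_left sum.distrib)

lemma Psi_C: "Psi (C a * H) = C a * Psi H"
  by (rule poly_mapping_eqI) (simp add: lookup_Psi sum_distrib_left mult.left_commute)

lemma Psi_zero: "Psi 0 = 0"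
  by (rule poly_mapping_eqI) (simp add: lookup_Psi)

lemma Psi_inj: "Psi H = 0 \<Longrightarrow> H = 0"
proof (rule ccontr)
  assume P: "Psi H = 0" and H: "H \<noteq> 0"
  let ?m = "Min ((\<lambda>\<beta>. Poly_Mapping.lookup \<beta> 0) ` Poly_Mapping.keys H)"
  have ne: "Poly_Mapping.keys H \<noteq> {}" using H by simp
  have "?m \<in> (\<lambda>\<beta>. Poly_Mapping.lookup \<beta> 0) ` Poly_Mapping.keys H" using ne by (intro Min_in) auto
  then obtain \<beta> where \<beta>: "\<beta> \<in> Poly_Mapping.keys H" and m: "Poly_Mapping.lookup \<beta> 0 = ?m" by auto
  have minl: "?m \<le> Poly_Mapping.lookup \<beta>' 0" if "\<beta>' \<in> Poly_Mapping.keys H" for \<beta>'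
    using that by (intro Min_le) auto
  have z: "of_nat (Poly_Mapping.lookup \<beta> 0 choose j) * Poly_Mapping.lookup H (shf \<beta> j) = 0"
    if "j \<in> {..Poly_Mapping.lookup \<beta> 0} - {0}" for j
  proof -
    have lt: "Poly_Mapping.lookup (shf \<beta> j) 0 < ?m" using that m by (auto simp: lookup_shf)
    have "shf \<beta> j \<notin> Poly_Mapping.keys H"
    proof
      assume "shf \<beta> j \<in> Poly_Mapping.keys H"
      then have "?m \<le> Poly_Mapping.lookup (shf \<beta> j) 0" by (rule minl)
      with lt show False by simp
    qed
    then show ?thesis by (simp add: in_keys_iff)
  qed
  have s0: "shf \<beta> 0 = \<beta>" by (rule poly_mapping_eqI) (simp add: lookup_shf)
  have "Poly_Mapping.lookup (Psi H) \<beta> = (\<Sum>j\<in>{0}. of_nat (Poly_Mapping.lookup \<beta> 0 choose j) * Poly_Mapping.lookup H (shf \<beta> j))"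
    unfolding lookup_Psi by (rule sum.mono_neutral_right) (use z in auto)
  also have "\<dots> = Poly_Mapping.lookup H \<beta>" by (simp add: s0)
  finally have "Poly_Mapping.lookup H \<beta> = 0" using P by simp
  then show False using \<beta> by (simp add: in_keys_iff)
qed

lemma pascal_sum:
  fixes T :: "nat \<Rightarrow> 'a::comm_ring_1"
  shows "(\<Sum>j\<le>Suc n. of_nat (Suc n choose j) * T j) =
     (\<Sum>j\<le>n. of_nat (n choose j) * T j) + (\<Sum>j\<le>n. of_nat (n choose j) * T (Suc j))"
proof -
  have A: "(\<Sum>j\<le>Suc n. of_nat (Suc n choose j) * T j) = T 0 + (\<Sum>j\<le>n. of_nat (Suc n choose Suc j) * T (Suc j))"
    by (subst sum.atMost_Suc_shift) (simp del: binomial_Suc_Suc)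
  have B: "(\<Sum>j\<le>n. of_nat (Suc n choose Suc j) * T (Suc j)) =
      (\<Sum>j\<le>n. of_nat (n choose j) * T (Suc j)) + (\<Sum>j\<le>n. of_nat (n choose Suc j) * T (Suc j))"
    by (simp add: sum.distrib distrib_right)
  have C1: "(\<Sum>j\<le>Suc n. of_nat (n choose j) * T j) = T 0 + (\<Sum>j\<le>n. of_nat (n choose Suc j) * T (Suc j))"
    by (subst sum.atMost_Suc_shift) simp
  have C2: "(\<Sum>j\<le>Suc n. of_nat (n choose j) * T j) = (\<Sum>j\<le>n. of_nat (n choose j) * T j)"
    by (simp add: binomial_eq_0)
  show ?thesis using A B C1 C2 by (simp add: algebra_simps)
qed

lemma contract_X_Psi: "contract (X i) (Psi H) = Psi (contract (sub 1 (X i)) H)"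
proof (cases "i = 0")
  case False
  show ?thesis
  proof (rule poly_mapping_eqI)
    fix \<beta> :: "nat \<Rightarrow>\<^sub>0 nat"
    have b0: "Poly_Mapping.lookup (\<beta> + ee i) 0 = Poly_Mapping.lookup \<beta> 0"
      using False by (simp add: lookup_add lookup_ee)
    have sh: "shf (\<beta> + ee i) j = shf \<beta> j + ee i" for j
      by (rule poly_mapping_eqI) (use False in \<open>simp add: lookup_shf lookup_add lookup_ee\<close>)
    have "Poly_Mapping.lookup (contract (X i) (Psi H)) \<beta> = Poly_Mapping.lookup (Psi H) (\<beta> + ee i)"
      by (simp add: contract_X_lookup ee_def)
    also have "\<dots> = (\<Sum>j\<le>Poly_Mapping.lookup \<beta> 0. of_nat (Poly_Mapping.lookup \<beta> 0 choose j) * Poly_Mapping.lookup H (shf \<beta> j + ee i))"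
      unfolding lookup_Psi b0 sh ..
    also have "\<dots> = Poly_Mapping.lookup (Psi (contract (sub 1 (X i)) H)) \<beta>"
      by (simp add: lookup_Psi sub_Xj[OF False] contract_X_lookup ee_def)
    finally show "Poly_Mapping.lookup (contract (X i) (Psi H)) \<beta> = Poly_Mapping.lookup (Psi (contract (sub 1 (X i)) H)) \<beta>" .
  qed
next
  case True
  show ?thesis
  proof (rule poly_mapping_eqI)
    fix \<beta> :: "nat \<Rightarrow>\<^sub>0 nat"
    define n where "n = Poly_Mapping.lookup \<beta> 0"
    define T where "T j = Poly_Mapping.lookup H (shf (\<beta> + ee 0) j)" for j
    have b0: "Poly_Mapping.lookup (\<beta> + ee 0) 0 = Suc n"
      by (simp add: lookup_add lookup_ee n_def)
    have sh0: "shf \<beta> j + ee 0 = shf (\<beta> + ee 0) j" if "j \<le> n" for j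
      by (rule poly_mapping_eqI) (use that in \<open>auto simp: lookup_shf lookup_add lookup_ee n_def Suc_diff_le\<close>)
    have sh1: "shf \<beta> j + ee 1 = shf (\<beta> + ee 0) (Suc j)" for j
      by (rule poly_mapping_eqI) (simp add: lookup_shf lookup_add lookup_ee)
    have "Poly_Mapping.lookup (contract (X 0) (Psi H)) \<beta> = Poly_Mapping.lookup (Psi H) (\<beta> + ee 0)"
      by (simp add: contract_X_lookup ee_def)
    also have "\<dots> = (\<Sum>j\<le>Suc n. of_nat (Suc n choose j) * T j)"
      unfolding lookup_Psi b0 T_def ..
    also have "\<dots> = (\<Sum>j\<le>n. of_nat (n choose j) * T j) + (\<Sum>j\<le>n. of_nat (n choose j) * T (Suc j))"
      by (rule pascal_sum)
    also have "\<dots> = (\<Sum>j\<le>n. of_nat (n choose j) * (T j + T (Suc j)))"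
      by (simp add: distrib_left sum.distrib)
    also have "\<dots> = (\<Sum>j\<le>n. of_nat (n choose j) * (Poly_Mapping.lookup H (shf \<beta> j + ee 0) + Poly_Mapping.lookup H (shf \<beta> j + ee 1)))"
      by (intro sum.cong refl) (simp add: T_def sh0 sh1 sh1[unfolded One_nat_def])
    also have "\<dots> = Poly_Mapping.lookup (Psi (contract (sub 1 (X 0)) H)) \<beta>"
      by (simp add: lookup_Psi sub_X0 contract_add_left lookup_add contract_X_lookup ee_def n_def)
    finally show "Poly_Mapping.lookup (contract (X i) (Psi H)) \<beta> = Poly_Mapping.lookup (Psi (contract (sub 1 (X i)) H)) \<beta>"
      using True by simp
  qed
qed

lemma contract_C: "contract (C a) G = C a * G"
  using contract_C_left[of a 1 G] by simp

lemma contract_Psi: "contract g (Psi H) = Psi (contract (sub 1 g) H)"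
proof (induction g arbitrary: H rule: mpoly_induct)
  case (add p q)
  then show ?case by (simp add: contract_add_left sub_add Psi_add)
next
  case (mult p q)
  then show ?case by (simp add: contract_mult sub_mult)
next
  case (const a)
  then show ?case by (simp add: sub_C contract_C Psi_C)
next
  case (var i)
  then show ?case by (rule contract_X_Psi)
qed


definition av_fun :: "nat \<Rightarrow> nat \<Rightarrow> nat \<Rightarrow> nat" where
  "av_fun c s i = (if i = 1 then s - 1 else if i < c then 1 else 0)"

definition av :: "nat \<Rightarrow> nat \<Rightarrow> (nat \<Rightarrow>\<^sub>0 nat)" where
  "av c s = Abs_poly_mapping (av_fun c s)"

lemma lookup_av: "Poly_Mapping.lookup (av c s) i = (if i = 1 then s - 1 else if i < c then 1 else 0)"
proof -
  have "{i. av_fun c s i \<noteq> 0} \<subseteq> {..Suc c}" by (auto simp: av_fun_def split: if_splits)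
  then have "finite {i. av_fun c s i \<noteq> 0}" by (rule finite_subset) simp
  then show ?thesis by (simp add: av_def av_fun_def)
qed

lemma av_vars: "2 \<le> c \<Longrightarrow> Poly_Mapping.keys (av c s) \<subseteq> {..<c}"
  by (auto simp: in_keys_iff lookup_av split: if_splits)

lemma av_pos: "2 \<le> s \<Longrightarrow> i < c \<Longrightarrow> 1 \<le> Poly_Mapping.lookup (av c s) i"
  by (auto simp: lookup_av)

lemma mono_all:
  assumes c: "2 \<le> c" and s: "2 \<le> s"
  shows "artinian_AF c (Poly_Mapping.single (av c s) (1::'a::field_char_0)) \<and>
         codim_AF c (Poly_Mapping.single (av c s) (1::'a)) \<and>
         complete_intersection_AF c (Poly_Mapping.single (av c s) (1::'a)) \<and>
         strong_lefschetz_AF c (Poly_Mapping.single (av c s) (1::'a))"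
  using mono_artinian mono_codim[OF av_vars[OF c] av_pos[OF s]] mono_CI[OF av_vars[OF c]]
    mono_SLP[OF av_vars[OF c]] by blast

definition gj :: "(nat \<Rightarrow>\<^sub>0 nat) \<Rightarrow> nat \<Rightarrow> (nat \<Rightarrow>\<^sub>0 nat)" where
  "gj a j = a + Poly_Mapping.single 0 j - Poly_Mapping.single 1 j"

lemma lookup_gj:
  "Poly_Mapping.lookup (gj a j) k = (if k = 0 then Poly_Mapping.lookup a 0 + j else if k = 1 then Poly_Mapping.lookup a 1 - j else Poly_Mapping.lookup a k)"
  by (simp add: gj_def lookup_add lookup_minus lookup_single when_def)

lemma keys_Psi_av:
  assumes s: "2 \<le> s" and c: "2 \<le> c"
  shows "Poly_Mapping.keys (Psi (Poly_Mapping.single (av c s) (1::'a::field_char_0))) = gj (av c s) ` {..s - 1}"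
proof -
  let ?a = "av c s"
  have a0: "Poly_Mapping.lookup ?a 0 = 1" and a1: "Poly_Mapping.lookup ?a 1 = s - 1"
    using c by (simp_all add: lookup_av)
  have lk: "Poly_Mapping.lookup (Psi (Poly_Mapping.single ?a (1::'a))) \<beta> =
      (\<Sum>j\<le>Poly_Mapping.lookup \<beta> 0. if shf \<beta> j = ?a then of_nat (Poly_Mapping.lookup \<beta> 0 choose j) else 0)" for \<beta>
    unfolding lookup_Psi by (intro sum.cong refl) (simp add: lookup_single when_def eq_commute)
  show ?thesis
  proof (rule equalityI)
    show "Poly_Mapping.keys (Psi (Poly_Mapping.single ?a (1::'a))) \<subseteq> gj ?a ` {..s - 1}"
    proof
      fix \<beta> assume "\<beta> \<in> Poly_Mapping.keys (Psi (Poly_Mapping.single ?a (1::'a)))"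
      then have "(\<Sum>j\<le>Poly_Mapping.lookup \<beta> 0. if shf \<beta> j = ?a then of_nat (Poly_Mapping.lookup \<beta> 0 choose j) else (0::'a)) \<noteq> 0"
        by (simp add: in_keys_iff lk)
      then obtain j where j: "j \<in> {..Poly_Mapping.lookup \<beta> 0}"
        and nz: "(if shf \<beta> j = ?a then of_nat (Poly_Mapping.lookup \<beta> 0 choose j) else (0::'a)) \<noteq> 0"
        by (rule sum.not_neutral_contains_not_neutral)
      then have sh: "shf \<beta> j = ?a" by (auto split: if_splits)
      have l: "Poly_Mapping.lookup ?a k = Poly_Mapping.lookup (shf \<beta> j) k" for k using sh by simp
      have "j \<le> s - 1" using l[of 1] a1 by (simp add: lookup_shf)
      moreover have "gj ?a j = \<beta>"
      proof (rule poly_mapping_eqI)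
        fix k
        show "Poly_Mapping.lookup (gj ?a j) k = Poly_Mapping.lookup \<beta> k"
          unfolding lookup_gj l using j by (auto simp: lookup_shf)
      qed
      ultimately show "\<beta> \<in> gj ?a ` {..s - 1}" by force
    qed
  next
    show "gj ?a ` {..s - 1} \<subseteq> Poly_Mapping.keys (Psi (Poly_Mapping.single ?a (1::'a)))"
    proof
      fix \<beta> assume "\<beta> \<in> gj ?a ` {..s - 1}"
      then obtain j where j: "j \<le> s - 1" and \<beta>: "\<beta> = gj ?a j" by auto
      have b0: "Poly_Mapping.lookup \<beta> 0 = Suc j" using a0 by (simp add: \<beta> lookup_gj)
      have cond: "shf \<beta> j' = ?a \<longleftrightarrow> j' = j" if "j' \<le> Suc j" for j'
      proof
        assume "shf \<beta> j' = ?a"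
        then have "Poly_Mapping.lookup (shf \<beta> j') 0 = 1" using a0 by simp
        then show "j' = j" using b0 that by (simp add: lookup_shf)
      next
        assume "j' = j"
        then show "shf \<beta> j' = ?a"
          by (intro poly_mapping_eqI) (use j a0 a1 in \<open>auto simp: lookup_shf \<beta> lookup_gj\<close>)
      qed
      have "Poly_Mapping.lookup (Psi (Poly_Mapping.single ?a (1::'a))) \<beta> =
          (\<Sum>j'\<le>Suc j. if j' = j then of_nat (Suc j choose j') else 0)"
        unfolding lk b0 by (intro sum.cong refl) (simp add: cond)
      also have "\<dots> = of_nat (Suc j)" by simp
      finally show "\<beta> \<in> Poly_Mapping.keys (Psi (Poly_Mapping.single ?a (1::'a)))"
        by (simp add: in_keys_iff del: of_nat_Suc)
    qed
  qed
qed

lemma twisted_all: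
  assumes c: "2 \<le> c" and s: "2 \<le> s"
  defines "F \<equiv> Psi (Poly_Mapping.single (av c s) (1::'a::field_char_0))"
  shows "in_vars c F \<and> homog (tdeg (av c s)) F \<and> card (Poly_Mapping.keys F) = s \<and>
         artinian_AF c F \<and> codim_AF c F \<and> complete_intersection_AF c F \<and> strong_lefschetz_AF c F"
proof -
  let ?a = "av c s"
  let ?F0 = "Poly_Mapping.single ?a (1::'a)"
  have K: "Poly_Mapping.keys F = gj ?a ` {..s - 1}" unfolding F_def by (rule keys_Psi_av[OF s c])
  have inj: "inj_on (gj ?a) {..s - 1}"
  proof
    fix x y assume "gj ?a x = gj ?a y"
    then have "Poly_Mapping.lookup (gj ?a x) 0 = Poly_Mapping.lookup (gj ?a y) 0" by simp
    then show "x = y" by (simp add: lookup_gj)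
  qed
  have card: "card (Poly_Mapping.keys F) = s"
    unfolding K card_image[OF inj] using s by simp
  have vars: "in_vars c F"
    unfolding in_vars_def K
  proof
    fix \<beta> assume "\<beta> \<in> gj ?a ` {..s - 1}"
    then obtain j where \<beta>: "\<beta> = gj ?a j" by auto
    show "Poly_Mapping.keys \<beta> \<subseteq> {..<c}"
    proof
      fix k assume "k \<in> Poly_Mapping.keys \<beta>"
      then have "Poly_Mapping.lookup (gj ?a j) k \<noteq> 0" by (simp add: \<beta> in_keys_iff)
      then show "k \<in> {..<c}" using c by (auto simp: lookup_gj lookup_av split: if_splits)
    qed
  qed
  have hom: "homog (tdeg ?a) F"
    unfolding homog_def K
  proof
    fix \<beta> assume "\<beta> \<in> gj ?a ` {..s - 1}"
    then obtain j where j: "j \<le> s - 1" and \<beta>: "\<beta> = gj ?a j" by auto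
    have d: "mdvd (Poly_Mapping.single 1 j) (?a + Poly_Mapping.single 0 j)"
      using j c by (auto simp: mdvd_def lookup_single when_def lookup_add lookup_av)
    show "tdeg \<beta> = tdeg ?a"
      using mdvd_tdeg[OF d] by (simp add: \<beta> gj_def tdeg_add)
  qed
  have Ann: "contract g F = 0 \<longleftrightarrow> contract (sub 1 g) ?F0 = 0" for g
  proof
    assume "contract g F = 0"
    then have "Psi (contract (sub 1 g) ?F0) = 0" by (simp add: F_def contract_Psi)
    then show "contract (sub 1 g) ?F0 = 0" by (rule Psi_inj)
  next
    assume "contract (sub 1 g) ?F0 = 0"
    then show "contract g F = 0" by (simp add: F_def contract_Psi Psi_zero)
  qed
  have inv2: "sub 1 (sub (-1) p) = p" for p :: "'a mpoly"
    using sub_inv[of "-1" p] by simp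
  note tr = transfer_artinian[of "sub 1" "sub (-1)" c F ?F0]
    transfer_codim[of "sub 1" "sub (-1)" c F ?F0]
    transfer_CI[of "sub 1" "sub (-1)" c F ?F0]
    transfer_SLP[of "sub 1" "sub (-1)" c F ?F0]
  have hyps: "(\<And>p q. sub 1 (p * q) = sub 1 p * sub (1::'a) q)" "(\<And>p q. sub 1 (p + q) = sub 1 p + sub (1::'a) q)"
    "(\<And>p q. sub (-1) (p * q) = sub (-1) p * sub (-1::'a) q)" "(\<And>p q. sub (-1) (p + q) = sub (-1) p + sub (-1::'a) q)"
    "(\<And>p. sub (-1) (sub 1 p) = (p::'a mpoly))" "(\<And>p. sub 1 (sub (-1) p) = (p::'a mpoly))"
    "(\<And>p i. p \<in> Rdeg c i \<Longrightarrow> sub 1 p \<in> Rdeg c i)" "(\<And>p i. p \<in> Rdeg c i \<Longrightarrow> sub (-1) (p::'a mpoly) \<in> Rdeg c i)"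
    "(\<And>p. in_vars c p \<Longrightarrow> in_vars c (sub 1 (p::'a mpoly)))" "(\<And>p. in_vars c p \<Longrightarrow> in_vars c (sub (-1) (p::'a mpoly)))"
    "(\<And>g. in_vars c g \<Longrightarrow> (contract g F = 0 \<longleftrightarrow> contract (sub 1 g) ?F0 = 0))"
    by (simp_all add: sub_mult sub_add sub_inv inv2 sub_Rdeg[OF c] sub_in_vars[OF c] Ann)
  have "artinian_AF c F" "codim_AF c F" "complete_intersection_AF c F" "strong_lefschetz_AF c F"
    using tr[OF hyps] mono_all[OF c s] by blast+
  then show ?thesis using vars hom card by blast
qed

theorem proposition5p1:
  fixes s c :: nat
  assumes "s \<ge> 1" and "c \<ge> 2"
  shows "\<exists>F :: 'a::{alg_closed_field, field_char_0} mpoly.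
           in_vars c F \<and> (\<exists>d. homog d F) \<and> card (Poly_Mapping.keys F) = s \<and>
           artinian_AF c F \<and> codim_AF c F \<and> complete_intersection_AF c F \<and>
           strong_lefschetz_AF c F"
proof (cases "s = 1")
  case True
  let ?F = "Poly_Mapping.single (av c 2) (1::'a)"
  have "in_vars c ?F" using av_vars[OF assms(2)] by (simp add: in_vars_single)
  moreover have "\<exists>d. homog d ?F" using homog_single by blast
  moreover have "card (Poly_Mapping.keys ?F) = s" using True by simp
  ultimately show ?thesis using mono_all[OF assms(2), of 2] by blast
next
  case False
  then have s: "2 \<le> s" using assms(1) by simp
  show ?thesis using twisted_all[OF assms(2) s] by blast
qed

end
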